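(* Let $X$ be a topological space and let $\mathcal{A}(X)\subset C(X)$ have the finite-dimensional composition property of order $n$. Assume $\sigma:\mathbb{R}\to\mathbb{R}$ is continuous and nonaffine, and that there exist $t_0\in\mathbb{R}$ and an open neighborhood $U$ of $t_0$ such that $\sigma$ is differentiable on $U$ and $\sigma'$ is continuous at $t_0$ with $\sigma'(t_0)\neq0$. Let $m\ge1$, $K\subset X$ compact, and let $f_1,\dots,f_n\in\mathcal{A}(X)$ be such that, with $F=(f_1,\dots,f_n)$, the set $\{u\circ F|_K: u\in C(\mathbb{R}^n;\mathbb{R}^m)\}$ is dense in $C(K;\mathbb{R}^m)$ (such $f_i$ exist by the property). Then for every $g\in C(K;\mathbb{R}^m)$ and every $\varepsilon>0$ there is $H\in\mathcal{N}^{(n+m+2,m)}(X,\sigma;F)$ with $\sup_{x\in K}\|g(x)-H(x)\|_{\mathbb{R}^m}<\varepsilon$; i.e. $\mathcal{N}^{(n+m+2,m)}(X,\sigma;F)|_K$ is dense in $C(K;\mathbb{R}^m)$.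
   Context: A family $\mathcal{A}(X)\subset C(X)$ has the finite-dimensional composition property of order $n$ if for every compact $K\subset X$ and every integer $m\ge1$ there exist $f_1,\dots,f_n\in\mathcal{A}(X)$ such that, with $F=(f_1,\dots,f_n):X\to\mathbb{R}^n$, the set $\{u\circ F|_K: u\in C(\mathbb{R}^n;\mathbb{R}^m)\}$ is dense in $C(K;\mathbb{R}^m)$ (uniform norm on $K$). A classical deep feedforward network $\Phi:\mathbb{R}^n\to\mathbb{R}^m$ with activation $\sigma$ is a map $\Phi=T_{l+1}\circ\sigma\circ T_l\circ\cdots\circ\sigma\circ T_0$ with affine maps $T_0:\mathbb{R}^n\to\mathbb{R}^{k_0}$, $T_j:\mathbb{R}^{k_{j-1}}\to\mathbb{R}^{k_j}$, $T_{l+1}:\mathbb{R}^{k_l}\to\mathbb{R}^m$, $\sigma$ acting componentwise; its width is $\max_j k_j$ (the maximal number of neurons in a hidden layer), with arbitrary depth $l$. For $F=(f_1,\dots,f_n)$ with $f_i\in\mathcal{A}(X)$, $k\in\mathbb{N}$ and $m\ge1$, $\mathcal{N}^{(k,m)}(X,\sigma;F)$ denotes the set of all $H:X\to\mathbb{R}^m$ of the form $H=\Phi\circ F$ where $\Phi:\mathbb{R}^n\to\mathbb{R}^m$ is a classical deep feedforward network with activation $\sigma$ and width at most $k$. *)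

theory Defs
  imports "HOL-Analysis.Analysis"
begin

text \<open>The space R^k is represented by the carrier Rn k of functions
  nat => real vanishing at all indices >= k, with the (product) topology inherited
  from nat => real; this subspace is homeomorphic to Euclidean R^k.\<close>

definition Rn :: "nat \<Rightarrow> (nat \<Rightarrow> real) set" where
  "Rn k = {x. \<forall>i\<ge>k. x i = 0}"

definition vnorm :: "nat \<Rightarrow> (nat \<Rightarrow> real) \<Rightarrow> real" where
  "vnorm k x = sqrt (\<Sum>i<k. (x i)\<^sup>2)"

text \<open>The map F = (f_1, ..., f_n) : X -> R^n (indices shifted to 0..n-1).\<close>
definition tuple :: "nat \<Rightarrow> (nat \<Rightarrow> 'a \<Rightarrow> real) \<Rightarrow> 'a \<Rightarrow> (nat \<Rightarrow> real)" where
  "tuple n f = (\<lambda>x i. if i < n then f i x else 0)"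

definition dense_comp :: "nat \<Rightarrow> nat \<Rightarrow> 'a::topological_space set \<Rightarrow> ('a \<Rightarrow> (nat \<Rightarrow> real)) \<Rightarrow> bool" where
  "dense_comp n m K F \<longleftrightarrow>
     (\<forall>g. continuous_on K g \<and> g ` K \<subseteq> Rn m \<longrightarrow>
       (\<forall>\<epsilon>>0. \<exists>u. continuous_on (Rn n) u \<and> u ` Rn n \<subseteq> Rn m \<and>
                    (\<forall>x\<in>K. vnorm m (g x - u (F x)) < \<epsilon>)))"

definition fd_comp_property :: "('a::topological_space \<Rightarrow> real) set \<Rightarrow> nat \<Rightarrow> bool" where
  "fd_comp_property A n \<longleftrightarrow>
     (\<forall>K m. compact K \<and> m \<ge> 1 \<longrightarrow>
        (\<exists>f. (\<forall>i<n. f i \<in> A) \<and> dense_comp n m K (tuple n f)))"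

definition affine_map :: "nat \<Rightarrow> nat \<Rightarrow> (nat \<Rightarrow> nat \<Rightarrow> real) \<Rightarrow> (nat \<Rightarrow> real)
    \<Rightarrow> (nat \<Rightarrow> real) \<Rightarrow> (nat \<Rightarrow> real)" where
  "affine_map a b W c x = (\<lambda>j. if j < b then (\<Sum>i<a. W j i * x i) + c j else 0)"

definition act :: "(real \<Rightarrow> real) \<Rightarrow> nat \<Rightarrow> (nat \<Rightarrow> real) \<Rightarrow> (nat \<Rightarrow> real)" where
  "act \<sigma> k y = (\<lambda>j. if j < k then \<sigma> (y j) else 0)"

text \<open>Hidden layers: d 0 is the input dimension, d (j+1) the width of hidden layer j+1;
  layers ... j x is the output of the j-th hidden layer (layer 0 = input).\<close>
fun layers :: "(real \<Rightarrow> real) \<Rightarrow> (nat \<Rightarrow> nat) \<Rightarrow> (nat \<Rightarrow> nat \<Rightarrow> nat \<Rightarrow> real)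
    \<Rightarrow> (nat \<Rightarrow> nat \<Rightarrow> real) \<Rightarrow> nat \<Rightarrow> (nat \<Rightarrow> real) \<Rightarrow> (nat \<Rightarrow> real)" where
  "layers \<sigma> d W b 0 x = x"
| "layers \<sigma> d W b (Suc j) x =
     act \<sigma> (d (Suc j)) (affine_map (d j) (d (Suc j)) (W j) (b j) (layers \<sigma> d W b j x))"

definition is_deep_net :: "(real \<Rightarrow> real) \<Rightarrow> nat \<Rightarrow> nat \<Rightarrow> nat
    \<Rightarrow> ((nat \<Rightarrow> real) \<Rightarrow> (nat \<Rightarrow> real)) \<Rightarrow> bool" where
  "is_deep_net \<sigma> n k m \<Phi> \<longleftrightarrow>
     (\<exists>L d W b. L \<ge> 1 \<and> d 0 = n \<and> (\<forall>j\<in>{1..L}. 1 \<le> d j \<and> d j \<le> k) \<and>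
        \<Phi> = (\<lambda>x. affine_map (d L) m (W L) (b L) (layers \<sigma> d W b L x)))"

definition NN :: "(real \<Rightarrow> real) \<Rightarrow> nat \<Rightarrow> nat \<Rightarrow> nat \<Rightarrow> ('a \<Rightarrow> (nat \<Rightarrow> real))
    \<Rightarrow> ('a \<Rightarrow> (nat \<Rightarrow> real)) set" where
  "NN \<sigma> k m n F = {H. \<exists>\<Phi>. is_deep_net \<sigma> n k m \<Phi> \<and> H = \<Phi> \<circ> F}"

end

theory Submission
  imports Defs "HOL-Analysis.Analysis"
begin
definition sgen :: "(real \<Rightarrow> real) \<Rightarrow> (real \<times> real \<times> real) list \<Rightarrow> real \<Rightarrow> real" where
  "sgen \<sigma> L u = sum_list (map (\<lambda>(d,e,f). d * \<sigma> (e*u+f)) L)"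

definition inS :: "(real \<Rightarrow> real) \<Rightarrow> (real \<Rightarrow> real) \<Rightarrow> bool" where
  "inS \<sigma> h \<longleftrightarrow> (\<forall>R \<epsilon>. 0 < \<epsilon> \<longrightarrow> (\<exists>L. \<forall>u. \<bar>u\<bar> \<le> R \<longrightarrow> \<bar>h u - sgen \<sigma> L u\<bar> < \<epsilon>))"

lemma sgen_Nil [simp]: "sgen \<sigma> [] u = 0"
  by (simp add: sgen_def)

lemma sgen_append: "sgen \<sigma> (L1 @ L2) u = sgen \<sigma> L1 u + sgen \<sigma> L2 u"
  by (simp add: sgen_def)

lemma sgen_scale: "sgen \<sigma> (map (\<lambda>(d,e,f). (c*d,e,f)) L) u = c * sgen \<sigma> L u"
  by (induct L) (auto simp: sgen_def algebra_simps)

lemma sgen_affine: "sgen \<sigma> (map (\<lambda>(d,e,f). (d, e*a, e*b+f)) L) u = sgen \<sigma> L (a*u+b)"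
  by (induct L) (auto simp: sgen_def algebra_simps)

lemma inS_sigma: "inS \<sigma> \<sigma>"
  unfolding inS_def
proof (intro allI impI)
  fix R \<epsilon> :: real assume "0 < \<epsilon>"
  show "\<exists>L. \<forall>u. \<bar>u\<bar> \<le> R \<longrightarrow> \<bar>\<sigma> u - sgen \<sigma> L u\<bar> < \<epsilon>"
    by (rule exI[of _ "[(1,1,0)]"]) (simp add: sgen_def \<open>0 < \<epsilon>\<close>)
qed

lemma inS_scale:
  assumes "inS \<sigma> h" shows "inS \<sigma> (\<lambda>u. c * h u)"
  unfolding inS_def
proof (intro allI impI)
  fix R \<epsilon> :: real assume e: "0 < \<epsilon>"
  have "0 < \<epsilon> / (\<bar>c\<bar> + 1)" using e by simp
  then obtain L where L: "\<And>u. \<bar>u\<bar> \<le> R \<Longrightarrow> \<bar>h u - sgen \<sigma> L u\<bar> < \<epsilon> / (\<bar>c\<bar> + 1)"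
    using assms unfolding inS_def by blast
  show "\<exists>L. \<forall>u. \<bar>u\<bar> \<le> R \<longrightarrow> \<bar>c * h u - sgen \<sigma> L u\<bar> < \<epsilon>"
  proof (intro exI allI impI)
    fix u :: real assume u: "\<bar>u\<bar> \<le> R"
    have "\<bar>c * h u - sgen \<sigma> (map (\<lambda>(d,e,f). (c*d,e,f)) L) u\<bar> = \<bar>c * (h u - sgen \<sigma> L u)\<bar>"
      unfolding sgen_scale by (simp add: right_diff_distrib)
    also have "\<dots> = \<bar>c\<bar> * \<bar>h u - sgen \<sigma> L u\<bar>" by (rule abs_mult)
    also have "\<dots> \<le> \<bar>c\<bar> * (\<epsilon> / (\<bar>c\<bar> + 1))"
      using L[OF u] by (intro mult_left_mono) auto
    also have "\<dots> < \<epsilon>" using e by (simp add: field_simps)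
    finally show "\<bar>c * h u - sgen \<sigma> (map (\<lambda>(d,e,f). (c*d,e,f)) L) u\<bar> < \<epsilon>" .
  qed
qed

lemma inS_add:
  assumes "inS \<sigma> h1" "inS \<sigma> h2" shows "inS \<sigma> (\<lambda>u. h1 u + h2 u)"
  unfolding inS_def
proof (intro allI impI)
  fix R \<epsilon> :: real assume e: "0 < \<epsilon>"
  obtain L1 where L1: "\<And>u. \<bar>u\<bar> \<le> R \<Longrightarrow> \<bar>h1 u - sgen \<sigma> L1 u\<bar> < \<epsilon>/2"
    using assms(1) e unfolding inS_def by (meson half_gt_zero)
  obtain L2 where L2: "\<And>u. \<bar>u\<bar> \<le> R \<Longrightarrow> \<bar>h2 u - sgen \<sigma> L2 u\<bar> < \<epsilon>/2"
    using assms(2) e unfolding inS_def by (meson half_gt_zero)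
  show "\<exists>L. \<forall>u. \<bar>u\<bar> \<le> R \<longrightarrow> \<bar>h1 u + h2 u - sgen \<sigma> L u\<bar> < \<epsilon>"
  proof (intro exI allI impI)
    fix u :: real assume u: "\<bar>u\<bar> \<le> R"
    show "\<bar>h1 u + h2 u - sgen \<sigma> (L1 @ L2) u\<bar> < \<epsilon>"
      using L1[OF u] L2[OF u] unfolding sgen_append by linarith
  qed
qed

lemma inS_affine:
  assumes "inS \<sigma> h" shows "inS \<sigma> (\<lambda>u. h (a*u+b))"
  unfolding inS_def
proof (intro allI impI)
  fix R \<epsilon> :: real assume e: "0 < \<epsilon>"
  obtain L where L: "\<And>v. \<bar>v\<bar> \<le> \<bar>a\<bar>*\<bar>R\<bar> + \<bar>b\<bar> \<Longrightarrow> \<bar>h v - sgen \<sigma> L v\<bar> < \<epsilon>"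
    using assms e unfolding inS_def by blast
  show "\<exists>L. \<forall>u. \<bar>u\<bar> \<le> R \<longrightarrow> \<bar>h (a*u+b) - sgen \<sigma> L u\<bar> < \<epsilon>"
  proof (intro exI allI impI)
    fix u :: real assume u: "\<bar>u\<bar> \<le> R"
    have "\<bar>a*u+b\<bar> \<le> \<bar>a\<bar>*\<bar>R\<bar> + \<bar>b\<bar>"
    proof -
      have "\<bar>a*u\<bar> \<le> \<bar>a\<bar>*\<bar>R\<bar>" using u by (simp add: abs_mult mult_left_mono)
      then show ?thesis by linarith
    qed
    from L[OF this]
    show "\<bar>h (a*u+b) - sgen \<sigma> (map (\<lambda>(d,e,f). (d, e*a, e*b+f)) L) u\<bar> < \<epsilon>"
      unfolding sgen_affine .
  qed
qed

lemma inS_limit: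
  assumes "\<And>R \<epsilon>. 0 < \<epsilon> \<Longrightarrow> \<exists>h'. inS \<sigma> h' \<and> (\<forall>u. \<bar>u\<bar> \<le> R \<longrightarrow> \<bar>h u - h' u\<bar> < \<epsilon>)"
  shows "inS \<sigma> h"
  unfolding inS_def
proof (intro allI impI)
  fix R \<epsilon> :: real assume e: "0 < \<epsilon>"
  have e2: "0 < \<epsilon>/2" using e by simp
  obtain h' where h'1: "inS \<sigma> h'" and h'2: "\<forall>u. \<bar>u\<bar> \<le> R \<longrightarrow> \<bar>h u - h' u\<bar> < \<epsilon>/2"
    using assms[OF e2] by blast
  obtain L where L: "\<forall>u. \<bar>u\<bar> \<le> R \<longrightarrow> \<bar>h' u - sgen \<sigma> L u\<bar> < \<epsilon>/2"
    using h'1 e2 unfolding inS_def by blast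
  show "\<exists>L. \<forall>u. \<bar>u\<bar> \<le> R \<longrightarrow> \<bar>h u - sgen \<sigma> L u\<bar> < \<epsilon>"
  proof (intro exI allI impI)
    fix u :: real assume u: "\<bar>u\<bar> \<le> R"
    have "\<bar>h u - h' u\<bar> < \<epsilon>/2" "\<bar>h' u - sgen \<sigma> L u\<bar> < \<epsilon>/2" using h'2 L u by auto
    then show "\<bar>h u - sgen \<sigma> L u\<bar> < \<epsilon>" by linarith
  qed
qed

lemma inS_zero: "inS \<sigma> (\<lambda>u. 0)"
  unfolding inS_def by (auto intro: exI[of _ "[]"])

lemma inS_cong: "inS \<sigma> h \<Longrightarrow> (\<And>u. h u = h' u) \<Longrightarrow> inS \<sigma> h'"
proof -
  assume "inS \<sigma> h" "\<And>u. h u = h' u"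
  then have "h = h'" by auto
  with \<open>inS \<sigma> h\<close> show ?thesis by simp
qed

lemma inS_sum:
  fixes N :: nat
  assumes "inS \<sigma> h" shows "inS \<sigma> (\<lambda>u. \<Sum>i<N. c i * h (u + b i))"
proof (induct N)
  case 0 then show ?case by (simp add: inS_zero)
next
  case (Suc N)
  have "inS \<sigma> (\<lambda>u. (\<Sum>i<N. c i * h (u + b i)) + c N * h (1*u + b N))"
    by (intro inS_add Suc inS_scale inS_affine assms)
  then show ?case by simp
qed

lemma int_piece:
  fixes h :: "real \<Rightarrow> real" and c l w :: real
  assumes hc: "continuous_on UNIV h" and l: "0 \<le> l"
    and w: "\<And>v. v \<in> {c..c+l} \<Longrightarrow> \<bar>h v - h c\<bar> \<le> w"
  shows "\<bar>integral {c..c+l} h - l * h c\<bar> \<le> l * w"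
proof -
  have ci: "continuous_on {c..c+l} h" using hc by (rule continuous_on_subset) auto
  have int1: "h integrable_on {c..c+l}" using ci by (rule integrable_continuous_real)
  have int2: "(\<lambda>v. h c) integrable_on {c..c+l}" by (intro integrable_continuous_real continuous_on_const)
  have int3: "(\<lambda>v. h v - h c) integrable_on {c..c+l}" using int1 int2 by (rule integrable_diff)
  have eq: "integral {c..c+l} (\<lambda>v. h v - h c) = integral {c..c+l} h - l * h c"
    using int1 int2 l by (simp add: integral_diff content_real)
  have wv: "h v - h c \<le> w \<and> - w \<le> h v - h c" if "v \<in> {c..c+l}" for v
    using w[OF that] by linarith
  have up: "integral {c..c+l} (\<lambda>v. h v - h c) \<le> integral {c..c+l} (\<lambda>v. w)"
    using int3 by (rule integral_le) (use wv in auto)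
  have lo: "integral {c..c+l} (\<lambda>v. - w) \<le> integral {c..c+l} (\<lambda>v. h v - h c)"
    using int3 by (intro integral_le) (use wv in auto)
  have "integral {c..c+l} (\<lambda>v. w) = l * w" using l by (simp add: content_real)
  moreover have "integral {c..c+l} (\<lambda>v. - w) = - (l * w)" using l by (simp add: content_real)
  ultimately show ?thesis using up lo eq by linarith
qed

lemma int_riemann:
  fixes h :: "real \<Rightarrow> real" and N :: nat and c l w :: real
  assumes hc: "continuous_on UNIV h" and l: "0 \<le> l"
    and w: "\<And>i v. i < N \<Longrightarrow> v \<in> {c+i*l..c+i*l+l} \<Longrightarrow> \<bar>h v - h (c+i*l)\<bar> \<le> w"
  shows "\<bar>integral {c..c+N*l} h - (\<Sum>i<N. l * h (c+i*l))\<bar> \<le> N*l*w"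
  using w
proof (induct N)
  case 0 then show ?case by simp
next
  case (Suc N)
  have IH: "\<bar>integral {c..c+N*l} h - (\<Sum>i<N. l * h (c+i*l))\<bar> \<le> N*l*w"
    using Suc by auto
  have P: "\<bar>integral {c+N*l..c+N*l+l} h - l * h (c+N*l)\<bar> \<le> l*w"
    using Suc.prems[of N] by (intro int_piece[OF hc l]) auto
  have ci: "continuous_on {c..c+N*l+l} h" using hc by (rule continuous_on_subset) auto
  have "integral {c..c+N*l} h + integral {c+N*l..c+N*l+l} h = integral {c..c+N*l+l} h"
    using l by (intro Henstock_Kurzweil_Integration.integral_combine integrable_continuous_real ci) auto
  moreover have "c + real (Suc N) * l = c+N*l+l" by (simp add: algebra_simps)
  ultimately show ?case using IH P by (simp add: algebra_simps)
qed

lemma inS_integral: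
  fixes h :: "real \<Rightarrow> real"
  assumes hc: "continuous_on UNIV h" and hS: "inS \<sigma> h" and d: "0 < \<delta>"
  shows "inS \<sigma> (\<lambda>u. integral {u..u+\<delta>} h)"
proof (rule inS_limit)
  fix R \<epsilon> :: real assume e: "0 < \<epsilon>"
  define I where "I = {-\<bar>R\<bar>-\<delta>-1..\<bar>R\<bar>+\<delta>+1}"
  have "uniformly_continuous_on I h"
    unfolding I_def by (rule compact_uniformly_continuous) (auto intro: continuous_on_subset[OF hc])
  moreover have "0 < \<epsilon> / (2*\<delta>)" using e d by simp
  ultimately obtain \<eta> where \<eta>: "\<eta> > 0" and uc: "\<And>x y. x \<in> I \<Longrightarrow> y \<in> I \<Longrightarrow> dist y x < \<eta> \<Longrightarrow> dist (h y) (h x) < \<epsilon> / (2*\<delta>)"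
    unfolding uniformly_continuous_on_def by metis
  obtain N :: nat where N: "\<delta> / \<eta> < N" using reals_Archimedean2 by blast
  have Npos: "0 < N" using N d \<eta> by (metis divide_pos_pos of_nat_0 gr_zeroI less_asym)
  define l where "l = \<delta> / N"
  have l0: "0 < l" unfolding l_def using d Npos by simp
  have lN: "N * l = \<delta>" unfolding l_def using Npos by simp
  have l\<eta>: "l < \<eta>" unfolding l_def using N \<eta> Npos d by (simp add: field_simps)
  define h' where "h' = (\<lambda>u. \<Sum>i<N. l * h (u + i*l))"
  have "inS \<sigma> h'" unfolding h'_def by (rule inS_sum[OF hS])
  moreover have "\<forall>u. \<bar>u\<bar> \<le> R \<longrightarrow> \<bar>integral {u..u+\<delta>} h - h' u\<bar> < \<epsilon>"
  proof (intro allI impI)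
    fix u :: real assume u: "\<bar>u\<bar> \<le> R"
    have "\<bar>integral {u..u+N*l} h - (\<Sum>i<N. l * h (u+i*l))\<bar> \<le> N*l*(\<epsilon> / (2*\<delta>))"
    proof (rule int_riemann[OF hc less_imp_le[OF l0]])
      fix i v assume i: "i < N" and v: "v \<in> {u+i*l..u+i*l+l}"
      have "real (Suc i) * l \<le> N * l" using i l0 by (intro mult_right_mono) auto
      then have B: "real i * l + l \<le> \<delta>" using lN by (simp add: algebra_simps)
      have B0: "0 \<le> real i * l" using l0 by simp
      have u1: "- \<bar>R\<bar> \<le> u" "u \<le> \<bar>R\<bar>" using u by auto
      have A: "u+i*l \<in> I" "v \<in> I" using v u1 B B0 l0 unfolding I_def atLeastAtMost_iff by linarith+
      have "dist v (u+i*l) < \<eta>" using v l\<eta> by (auto simp: dist_real_def)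
      from uc[OF A this] show "\<bar>h v - h (u+i*l)\<bar> \<le> \<epsilon> / (2*\<delta>)" by (simp add: dist_real_def)
    qed
    also have "N*l*(\<epsilon> / (2*\<delta>)) = \<epsilon>/2" using lN d by simp
    finally show "\<bar>integral {u..u+\<delta>} h - h' u\<bar> < \<epsilon>" unfolding h'_def lN using e by simp
  qed
  ultimately show "\<exists>h'. inS \<sigma> h' \<and> (\<forall>u. \<bar>u\<bar> \<le> R \<longrightarrow> \<bar>integral {u..u+\<delta>} h - h' u\<bar> < \<epsilon>)" by blast
qed

lemma deriv_integral:
  fixes h :: "real \<Rightarrow> real"
  assumes hc: "continuous_on UNIV h" and d: "0 < \<delta>"
  shows "((\<lambda>u. integral {u..u+\<delta>} h) has_real_derivative (h (x+\<delta>) - h x)) (at x)"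
proof -
  define a where "a = x - 1"
  define b where "b = x + \<delta> + 1"
  define F where "F = (\<lambda>u. integral {a..u} h)"
  have ci: "continuous_on {a..b} h" using hc by (rule continuous_on_subset) auto
  have DF: "(F has_real_derivative h u) (at u)" if "a < u" "u < b" for u
  proof -
    have "(F has_real_derivative h u) (at u within {a..b})"
      unfolding F_def using that by (intro integral_has_real_derivative ci) auto
    then show ?thesis using at_within_Icc_at[OF that] by simp
  qed
  have D1: "((\<lambda>u. F (u+\<delta>)) has_real_derivative h (x+\<delta>)) (at x)"
    using DF[of "x+\<delta>"] unfolding a_def b_def using d by (simp add: DERIV_shift)
  have D2: "(F has_real_derivative h x) (at x)"
    using DF[of x] unfolding a_def b_def using d by simp
  have D: "((\<lambda>u. F (u+\<delta>) - F u) has_real_derivative (h (x+\<delta>) - h x)) (at x)"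
    using D1 D2 by (rule DERIV_diff)
  show ?thesis
  proof (rule has_field_derivative_transform_within_open[OF D, of "{x-1<..<x+1}"])
    fix u assume u: "u \<in> {x-1<..<x+1}"
    have "integral {a..u} h + integral {u..u+\<delta>} h = integral {a..u+\<delta>} h"
      using u d unfolding a_def
      by (intro Henstock_Kurzweil_Integration.integral_combine integrable_continuous_real continuous_on_subset[OF hc]) auto
    then show "F (u+\<delta>) - F u = integral {u..u+\<delta>} h" unfolding F_def by simp
  qed auto
qed

lemma cont_integral:
  fixes h :: "real \<Rightarrow> real"
  assumes hc: "continuous_on UNIV h" and d: "0 < \<delta>"
  shows "continuous_on UNIV (\<lambda>u. integral {u..u+\<delta>} h)"
  using deriv_integral[OF hc d] DERIV_isCont continuous_at_imp_continuous_on by blast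

lemma D2_zero_affine:
  fixes g :: "real \<Rightarrow> real"
  assumes gc: "continuous_on UNIV g"
    and H: "\<And>s \<delta>. 0 < \<delta> \<Longrightarrow> g (s+2*\<delta>) - 2*g (s+\<delta>) + g s = 0"
  shows "\<exists>a c. \<forall>t. g t = a*t + c"
proof -
  define \<phi> where "\<phi> t = g t - g 0 - t*(g 1 - g 0)" for t
  have H\<phi>: "\<phi> (s+2*\<delta>) - 2*\<phi> (s+\<delta>) + \<phi> s = 0" if "0 < \<delta>" for s \<delta>
    using H[OF that, of s] unfolding \<phi>_def by (simp add: algebra_simps)
  have \<phi>0: "\<phi> 0 = 0" and \<phi>1: "\<phi> 1 = 0" unfolding \<phi>_def by simp_all
  have prog: "\<phi> (real k * d) = real k * \<phi> d \<and> \<phi> (real (Suc k) * d) = real (Suc k) * \<phi> d"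
    if d: "0 < d" for d and k :: nat
  proof (induct k)
    case 0 then show ?case using \<phi>0 by simp
  next
    case (Suc k)
    have "\<phi> (real k * d + 2*d) - 2*\<phi> (real k * d + d) + \<phi> (real k * d) = 0" by (rule H\<phi>[OF d])
    moreover have "real k * d + 2*d = real (Suc (Suc k)) * d" "real k * d + d = real (Suc k) * d"
      by (simp_all add: algebra_simps)
    ultimately have "\<phi> (real (Suc (Suc k)) * d) = 2 * \<phi> (real (Suc k) * d) - \<phi> (real k * d)" by simp
    with Suc show ?case by (simp add: algebra_simps)
  qed
  have pos: "\<phi> (real p / real q) = 0" if q: "q \<noteq> 0" for p q :: nat
  proof -
    have d: "0 < 1 / real q" using q by simp
    have "\<phi> (real q * (1 / real q)) = real q * \<phi> (1 / real q)" using prog[OF d] by blast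
    then have "\<phi> (1 / real q) = 0" using q \<phi>1 by simp
    moreover have "\<phi> (real p * (1 / real q)) = real p * \<phi> (1 / real q)" using prog[OF d] by blast
    ultimately show ?thesis by simp
  qed
  have neg: "\<phi> (- r) = - \<phi> r" if "0 < r" for r
    using H\<phi>[OF that, of "-r"] \<phi>0 by simp
  have rat: "\<phi> x = 0" if xr: "x \<in> \<rat>" for x
  proof -
    obtain m n :: nat where n: "n \<noteq> 0" and x: "\<bar>x\<bar> = real m / real n"
      using Rats_abs_nat_div_natE[OF xr] by metis
    have a: "\<phi> \<bar>x\<bar> = 0" using pos[OF n] x by simp
    show ?thesis
    proof (cases "x < 0")
      case True
      then have "x = - \<bar>x\<bar>" "0 < \<bar>x\<bar>" by auto
      then have "\<phi> x = \<phi> (- \<bar>x\<bar>)" "\<phi> (- \<bar>x\<bar>) = - \<phi> \<bar>x\<bar>" using neg[of "\<bar>x\<bar>"] by simp_all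
      then show ?thesis using a by simp
    next
      case False then show ?thesis using a by simp
    qed
  qed
  have \<phi>c: "continuous_on UNIV \<phi>" unfolding \<phi>_def by (intro continuous_intros gc)
  have cl: "closed {t. \<phi> t = (\<lambda>_. 0) t}" by (rule closed_Collect_eq[OF \<phi>c continuous_on_const])
  have "\<rat> \<subseteq> {t. \<phi> t = (\<lambda>_. 0) t}" using rat by auto
  then have "closure \<rat> \<subseteq> {t. \<phi> t = (\<lambda>_. 0) t}" using cl by (rule closure_minimal)
  then have "\<forall>t. \<phi> t = 0" using Rats_closure_real by auto
  then have "\<forall>t. g t = (g 1 - g 0) * t + g 0" unfolding \<phi>_def by (simp add: algebra_simps)
  then show ?thesis by blast
qed

lemma nonaffine_D2:
  fixes g :: "real \<Rightarrow> real"
  assumes gc: "continuous_on UNIV g" and na: "\<not> (\<exists>a c. \<forall>t. g t = a*t + c)"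
  shows "\<exists>s \<delta>. 0 < \<delta> \<and> g (s+2*\<delta>) - 2*g (s+\<delta>) + g s \<noteq> 0"
  using D2_zero_affine[OF gc] na by blast

lemma taylor2_even:
  fixes Q Q1 D2 :: "real \<Rightarrow> real"
  assumes dQ: "\<And>x. (Q has_real_derivative Q1 x) (at x)"
    and dQ1: "\<And>x. (Q1 has_real_derivative D2 x) (at x)"
  shows "\<exists>t. \<bar>t\<bar> \<le> \<bar>x\<bar> \<and> Q (s+x) + Q (s-x) - 2 * Q s = (D2 (s+t) + D2 (s-t)) / 2 * x^2"
proof -
  define diff :: "nat \<Rightarrow> real \<Rightarrow> real" where
    "diff m = (if m = 0 then (\<lambda>x. Q (s+x) + Q (s-x) - 2 * Q s)
       else if m = 1 then (\<lambda>x. Q1 (s+x) - Q1 (s-x)) else (\<lambda>x. D2 (s+x) + D2 (s-x)))" for m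
  have d0: "((\<lambda>x. Q (s+x) + Q (s-x) - 2 * Q s) has_real_derivative (Q1 (s+t) - Q1 (s-t))) (at t)" for t
  proof -
    have a: "((\<lambda>x. Q (s+x)) has_real_derivative Q1 (s+t) * 1) (at t)"
      by (rule DERIV_chain2[OF dQ]) (auto intro!: derivative_eq_intros)
    have b: "((\<lambda>x. Q (s-x)) has_real_derivative Q1 (s-t) * (-1)) (at t)"
      by (rule DERIV_chain2[OF dQ]) (auto intro!: derivative_eq_intros)
    have "((\<lambda>x. Q (s+x) + Q (s-x) - 2 * Q s) has_real_derivative (Q1 (s+t) * 1 + Q1 (s-t) * (-1) - 0)) (at t)"
      by (intro DERIV_diff DERIV_add a b DERIV_const)
    then show ?thesis by simp
  qed
  have d1: "((\<lambda>x. Q1 (s+x) - Q1 (s-x)) has_real_derivative (D2 (s+t) + D2 (s-t))) (at t)" for t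
  proof -
    have a: "((\<lambda>x. Q1 (s+x)) has_real_derivative D2 (s+t) * 1) (at t)"
      by (rule DERIV_chain2[OF dQ1]) (auto intro!: derivative_eq_intros)
    have b: "((\<lambda>x. Q1 (s-x)) has_real_derivative D2 (s-t) * (-1)) (at t)"
      by (rule DERIV_chain2[OF dQ1]) (auto intro!: derivative_eq_intros)
    have "((\<lambda>x. Q1 (s+x) - Q1 (s-x)) has_real_derivative (D2 (s+t) * 1 - D2 (s-t) * (-1))) (at t)"
      by (intro DERIV_diff a b)
    then show ?thesis by simp
  qed
  have "\<forall>m t. m < 2 \<and> \<bar>t\<bar> \<le> \<bar>x\<bar> \<longrightarrow> (diff m has_real_derivative diff (Suc m) t) (at t)"
  proof (intro allI impI)
    fix m t assume "m < (2::nat) \<and> \<bar>t\<bar> \<le> \<bar>x\<bar>"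
    then have "m = 0 \<or> m = 1" by auto
    then show "(diff m has_real_derivative diff (Suc m) t) (at t)"
      using d0 d1 unfolding diff_def by auto
  qed
  from Maclaurin_bi_le[of diff "\<lambda>x. Q (s+x) + Q (s-x) - 2 * Q s" 2 x, OF _ this]
  obtain t where t: "\<bar>t\<bar> \<le> \<bar>x\<bar>"
    and eq: "Q (s+x) + Q (s-x) - 2 * Q s = (\<Sum>m<2. diff m 0 / fact m * x ^ m) + diff 2 t / fact 2 * x ^ 2"
    unfolding diff_def by auto
  have "(\<Sum>m<2. diff m 0 / fact m * x ^ m) = 0"
    by (simp add: diff_def numeral_2_eq_2)
  moreover have "diff 2 t / fact 2 * x ^ 2 = (D2 (s+t) + D2 (s-t)) / 2 * x^2"
    by (simp add: diff_def)
  ultimately show ?thesis using t eq by auto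
qed

lemma inS_square:
  fixes \<sigma> :: "real \<Rightarrow> real"
  assumes \<sigma>c: "continuous_on UNIV \<sigma>" and na: "\<not> (\<exists>a c. \<forall>t. \<sigma> t = a*t + c)"
  shows "inS \<sigma> (\<lambda>u. u^2)"
proof -
  obtain s1 \<delta> where d: "0 < \<delta>" and Dn: "\<sigma> (s1+2*\<delta>) - 2*\<sigma> (s1+\<delta>) + \<sigma> s1 \<noteq> 0"
    using nonaffine_D2[OF \<sigma>c na] by blast
  define D2 where "D2 x = \<sigma> (x+2*\<delta>) - 2*\<sigma> (x+\<delta>) + \<sigma> x" for x
  define D where "D = D2 s1"
  have D0: "D \<noteq> 0" using Dn unfolding D_def D2_def .
  define G where "G u = integral {u..u+\<delta>} \<sigma>" for u
  define Q where "Q u = integral {u..u+\<delta>} G" for u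
  define Q1 where "Q1 x = G (x+\<delta>) - G x" for x
  have Gc: "continuous_on UNIV G" unfolding G_def by (rule cont_integral[OF \<sigma>c d])
  have dG: "(G has_real_derivative (\<sigma> (x+\<delta>) - \<sigma> x)) (at x)" for x
    unfolding G_def[abs_def] by (rule deriv_integral[OF \<sigma>c d])
  have dQ: "(Q has_real_derivative Q1 x) (at x)" for x
    unfolding Q_def[abs_def] Q1_def by (rule deriv_integral[OF Gc d])
  have dQ1: "(Q1 has_real_derivative D2 x) (at x)" for x
  proof -
    have a: "((\<lambda>x. G (x+\<delta>)) has_real_derivative (\<sigma> (x+\<delta>+\<delta>) - \<sigma> (x+\<delta>))) (at x)"
      using dG[of "x+\<delta>"] by (simp add: DERIV_shift)
    have "(Q1 has_real_derivative ((\<sigma> (x+\<delta>+\<delta>) - \<sigma> (x+\<delta>)) - (\<sigma> (x+\<delta>) - \<sigma> x))) (at x)"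
      unfolding Q1_def[abs_def] by (intro DERIV_diff a dG)
    moreover have "x+\<delta>+\<delta> = x + 2*\<delta>" by simp
    ultimately show ?thesis unfolding D2_def by (simp add: algebra_simps)
  qed
  have GS: "inS \<sigma> G" unfolding G_def[abs_def] by (rule inS_integral[OF \<sigma>c inS_sigma d])
  have QS: "inS \<sigma> Q" unfolding Q_def[abs_def] by (rule inS_integral[OF Gc GS d])
  have D2c: "continuous_on UNIV D2"
  proof -
    have "continuous_on UNIV (\<lambda>x. \<sigma> (x+2*\<delta>))"
      by (rule continuous_on_compose2[OF \<sigma>c]) (auto intro!: continuous_intros)
    moreover have "continuous_on UNIV (\<lambda>x. \<sigma> (x+\<delta>))"
      by (rule continuous_on_compose2[OF \<sigma>c]) (auto intro!: continuous_intros)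
    ultimately show ?thesis unfolding D2_def[abs_def] by (intro continuous_intros \<sigma>c)
  qed
  then have "isCont D2 s1" by (simp add: continuous_on_eq_continuous_at)
  then have D2lim: "\<forall>r>0. \<exists>\<rho>>0. \<forall>y. \<bar>y - s1\<bar> < \<rho> \<longrightarrow> \<bar>D2 y - D\<bar> < r"
    unfolding isCont_def LIM_eq D_def by (metis abs_zero diff_self real_norm_def)
  show ?thesis
  proof (rule inS_limit)
    fix R \<epsilon> :: real assume e: "0 < \<epsilon>"
    define R' where "R' = \<bar>R\<bar> + 1"
    have R'0: "0 < R'" unfolding R'_def by simp
    define \<eta> where "\<eta> = \<epsilon> * \<bar>D\<bar> / (2 * R'^2)"
    have \<eta>0: "0 < \<eta>" unfolding \<eta>_def using e D0 R'0 by simp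
    obtain \<rho> where \<rho>0: "\<rho> > 0" and \<rho>: "\<And>y. \<bar>y - s1\<bar> < \<rho> \<Longrightarrow> \<bar>D2 y - D\<bar> < \<eta>"
      using D2lim \<eta>0 by blast
    define h where "h = \<rho> / (2*R')"
    have h0: "0 < h" unfolding h_def using \<rho>0 R'0 by simp
    define c where "c = 1 / (h^2 * D)"
    define p where "p u = c * ((Q (h*u + s1) + Q ((-h)*u + s1)) + (-2) * Q (0*u + s1))" for u
    have pS: "inS \<sigma> p" unfolding p_def[abs_def]
      by (intro inS_scale inS_add inS_affine QS)
    have "\<forall>u. \<bar>u\<bar> \<le> R \<longrightarrow> \<bar>u^2 - p u\<bar> < \<epsilon>"
    proof (intro allI impI)
      fix u :: real assume u: "\<bar>u\<bar> \<le> R"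
      obtain t where t: "\<bar>t\<bar> \<le> \<bar>h*u\<bar>"
        and eq: "Q (s1+h*u) + Q (s1-h*u) - 2 * Q s1 = (D2 (s1+t) + D2 (s1-t)) / 2 * (h*u)^2"
        using taylor2_even[OF dQ dQ1, of "h*u" s1] by blast
      have uR: "\<bar>u\<bar> \<le> R'" using u unfolding R'_def by simp
      have "\<bar>h*u\<bar> \<le> h * R'" using uR h0 by (simp add: abs_mult mult_left_mono)
      also have "h * R' < \<rho>" unfolding h_def using R'0 \<rho>0 by (simp add: field_simps)
      finally have tr: "\<bar>t\<bar> < \<rho>" using t by linarith
      have e1: "\<bar>D2 (s1+t) - D\<bar> \<le> \<eta>" using \<rho>[of "s1+t"] tr by simp
      have e2: "\<bar>D2 (s1-t) - D\<bar> \<le> \<eta>" using \<rho>[of "s1-t"] tr by simp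
      have pu: "p u = (D2 (s1+t) + D2 (s1-t)) / (2*D) * u^2"
      proof -
        have "p u = c * (Q (s1+h*u) + Q (s1-h*u) - 2 * Q s1)"
          unfolding p_def by (simp add: algebra_simps)
        also have "\<dots> = c * ((D2 (s1+t) + D2 (s1-t)) / 2 * (h*u)^2)" by (simp add: eq)
        also have "\<dots> = (D2 (s1+t) + D2 (s1-t)) / (2*D) * u^2"
          unfolding c_def using h0 D0 by (simp add: field_simps power_mult_distrib)
        finally show ?thesis .
      qed
      have "u^2 - p u = u^2 * ((D - D2 (s1+t)) + (D - D2 (s1-t))) / (2*D)"
        unfolding pu using D0 by (simp add: field_simps)
      then have "\<bar>u^2 - p u\<bar> = u^2 * \<bar>(D - D2 (s1+t)) + (D - D2 (s1-t))\<bar> / (2*\<bar>D\<bar>)"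
        by (simp add: abs_mult abs_divide)
      also have "\<dots> \<le> R'^2 * (2*\<eta>) / (2*\<bar>D\<bar>)"
      proof (intro divide_right_mono mult_mono)
        show "u^2 \<le> R'^2" using uR by (metis abs_ge_zero power2_abs power_mono)
        show "\<bar>(D - D2 (s1+t)) + (D - D2 (s1-t))\<bar> \<le> 2*\<eta>" using e1 e2 by linarith
      qed (use \<eta>0 in auto)
      also have "\<dots> = \<epsilon> / 2" unfolding \<eta>_def using D0 R'0 by (simp add: field_simps)
      also have "\<dots> < \<epsilon>" using e by simp
      finally show "\<bar>u^2 - p u\<bar> < \<epsilon>" .
    qed
    with pS show "\<exists>h'. inS \<sigma> h' \<and> (\<forall>u. \<bar>u\<bar> \<le> R \<longrightarrow> \<bar>u^2 - h' u\<bar> < \<epsilon>)" by blast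
  qed
qed

lemma affine_comp:
  "affine_map b c W2 c2 (affine_map a b W1 c1 x) =
   affine_map a c (\<lambda>j i. \<Sum>l<b. W2 j l * W1 l i) (\<lambda>j. (\<Sum>l<b. W2 j l * c1 l) + c2 j) x"
proof
  fix j
  show "affine_map b c W2 c2 (affine_map a b W1 c1 x) j =
   affine_map a c (\<lambda>j i. \<Sum>l<b. W2 j l * W1 l i) (\<lambda>j. (\<Sum>l<b. W2 j l * c1 l) + c2 j) x j"
  proof (cases "j < c")
    case True
    have "(\<Sum>l<b. W2 j l * affine_map a b W1 c1 x l) = (\<Sum>l<b. W2 j l * ((\<Sum>i<a. W1 l i * x i) + c1 l))"
      by (intro sum.cong) (auto simp: affine_map_def)
    also have "\<dots> = (\<Sum>l<b. \<Sum>i<a. W2 j l * W1 l i * x i) + (\<Sum>l<b. W2 j l * c1 l)"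
      by (simp add: sum_distrib_left distrib_left sum.distrib mult.assoc)
    also have "(\<Sum>l<b. \<Sum>i<a. W2 j l * W1 l i * x i) = (\<Sum>i<a. (\<Sum>l<b. W2 j l * W1 l i) * x i)"
      by (subst sum.swap) (simp add: sum_distrib_right)
    finally show ?thesis using True by (simp add: affine_map_def)
  next
    case False then show ?thesis by (simp add: affine_map_def)
  qed
qed

lemma net_out_zero:
  assumes "is_deep_net \<sigma> a k b \<Phi>" "b \<le> i"
  shows "\<Phi> x i = 0"
  using assms unfolding is_deep_net_def affine_map_def by auto

lemma net_comp:
  assumes N2: "is_deep_net \<sigma> b k c \<Phi>2" and N1: "is_deep_net \<sigma> a k b \<Phi>1"
  shows "is_deep_net \<sigma> a k c (\<lambda>x. \<Phi>2 (\<Phi>1 x))"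
proof -
  obtain L1 d1 W1 b1 where L1: "L1 \<ge> 1" "d1 0 = a" "\<forall>j\<in>{1..L1}. 1 \<le> d1 j \<and> d1 j \<le> k"
    and P1: "\<Phi>1 = (\<lambda>x. affine_map (d1 L1) b (W1 L1) (b1 L1) (layers \<sigma> d1 W1 b1 L1 x))"
    using N1 unfolding is_deep_net_def by blast
  obtain L2 d2 W2 b2 where L2: "L2 \<ge> 1" "d2 0 = b" "\<forall>j\<in>{1..L2}. 1 \<le> d2 j \<and> d2 j \<le> k"
    and P2: "\<Phi>2 = (\<lambda>x. affine_map (d2 L2) c (W2 L2) (b2 L2) (layers \<sigma> d2 W2 b2 L2 x))"
    using N2 unfolding is_deep_net_def by blast
  define Wm where "Wm = (\<lambda>j i. \<Sum>l<b. W2 0 j l * W1 L1 l i)"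
  define bm where "bm = (\<lambda>j. (\<Sum>l<b. W2 0 j l * b1 L1 l) + b2 0 j)"
  define d where "d j = (if j \<le> L1 then d1 j else d2 (j - L1))" for j
  define W where "W j = (if j < L1 then W1 j else if j = L1 then Wm else W2 (j - L1))" for j
  define B where "B j = (if j < L1 then b1 j else if j = L1 then bm else b2 (j - L1))" for j
  have C1: "j \<le> L1 \<Longrightarrow> layers \<sigma> d W B j x = layers \<sigma> d1 W1 b1 j x" for j x
  proof (induct j)
    case 0 then show ?case by simp
  next
    case (Suc j)
    then show ?case by (simp add: d_def W_def B_def)
  qed
  have C2: "layers \<sigma> d W B (L1 + Suc j) x = layers \<sigma> d2 W2 b2 (Suc j) (\<Phi>1 x)" for j x
  proof (induct j)
    case 0
    have "layers \<sigma> d W B (L1 + Suc 0) x =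
      act \<sigma> (d2 1) (affine_map (d1 L1) (d2 1) Wm bm (layers \<sigma> d1 W1 b1 L1 x))"
      using C1[of L1 x] by (simp add: d_def W_def B_def)
    also have "\<dots> = layers \<sigma> d2 W2 b2 (Suc 0) (\<Phi>1 x)"
      unfolding P1 by (simp add: affine_comp L2(2) Wm_def bm_def)
    finally show ?case by simp
  next
    case (Suc j)
    have "layers \<sigma> d W B (L1 + Suc (Suc j)) x = act \<sigma> (d (Suc (L1 + Suc j)))
       (affine_map (d (L1 + Suc j)) (d (Suc (L1 + Suc j))) (W (L1 + Suc j)) (B (L1 + Suc j))
         (layers \<sigma> d W B (L1 + Suc j) x))" by simp
    also have "\<dots> = layers \<sigma> d2 W2 b2 (Suc (Suc j)) (\<Phi>1 x)"
      unfolding Suc by (simp add: d_def W_def B_def)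
    finally show ?case .
  qed
  obtain j where j: "L2 = Suc j" using L2(1) by (cases L2) auto
  show ?thesis unfolding is_deep_net_def
  proof (intro exI conjI)
    show "1 \<le> L1 + L2" using L1 by simp
    show "d 0 = a" using L1 by (simp add: d_def)
    show "\<forall>i\<in>{1..L1 + L2}. 1 \<le> d i \<and> d i \<le> k"
    proof
      fix i assume i: "i \<in> {1..L1 + L2}"
      show "1 \<le> d i \<and> d i \<le> k"
      proof (cases "i \<le> L1")
        case True then show ?thesis using i L1(3) by (simp add: d_def)
      next
        case False then have "i - L1 \<in> {1..L2}" using i by auto
        then show ?thesis using False L2(3) by (simp add: d_def)
      qed
    qed
    show "(\<lambda>x. \<Phi>2 (\<Phi>1 x)) =
      (\<lambda>x. affine_map (d (L1 + L2)) c (W (L1 + L2)) (B (L1 + L2)) (layers \<sigma> d W B (L1 + L2) x))"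
    proof
      fix x
      show "\<Phi>2 (\<Phi>1 x) = affine_map (d (L1 + L2)) c (W (L1 + L2)) (B (L1 + L2)) (layers \<sigma> d W B (L1 + L2) x)"
        unfolding j C2 unfolding P2 j by (simp add: d_def W_def B_def)
    qed
  qed
qed

lemma net_post:
  assumes N: "is_deep_net \<sigma> a k b \<Phi>"
  shows "is_deep_net \<sigma> a k c (\<lambda>x. affine_map b c W2 c2 (\<Phi> x))"
proof -
  obtain L d W1 b1 where L: "L \<ge> 1" "d 0 = a" "\<forall>j\<in>{1..L}. 1 \<le> d j \<and> d j \<le> k"
    and P: "\<Phi> = (\<lambda>x. affine_map (d L) b (W1 L) (b1 L) (layers \<sigma> d W1 b1 L x))"
    using N unfolding is_deep_net_def by blast
  define W where "W j = (if j = L then (\<lambda>j i. \<Sum>l<b. W2 j l * W1 L l i) else W1 j)" for j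
  define B where "B j = (if j = L then (\<lambda>j. (\<Sum>l<b. W2 j l * b1 L l) + c2 j) else b1 j)" for j
  have C: "j \<le> L \<Longrightarrow> layers \<sigma> d W B j x = layers \<sigma> d W1 b1 j x" for j x
    by (induct j) (auto simp: W_def B_def)
  show ?thesis unfolding is_deep_net_def
    by (intro exI[of _ L] exI[of _ d] exI[of _ W] exI[of _ B])
       (use L in \<open>auto simp: C P affine_comp W_def B_def\<close>)
qed

lemma net_pre:
  assumes N: "is_deep_net \<sigma> b k c \<Phi>"
  shows "is_deep_net \<sigma> a k c (\<lambda>x. \<Phi> (affine_map a b W0 c0 x))"
proof -
  obtain L d W1 b1 where L: "L \<ge> 1" "d 0 = b" "\<forall>j\<in>{1..L}. 1 \<le> d j \<and> d j \<le> k"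
    and P: "\<Phi> = (\<lambda>x. affine_map (d L) c (W1 L) (b1 L) (layers \<sigma> d W1 b1 L x))"
    using N unfolding is_deep_net_def by blast
  define d' where "d' j = (if j = 0 then a else d j)" for j
  define W where "W j = (if j = 0 then (\<lambda>j i. \<Sum>l<b. W1 0 j l * W0 l i) else W1 j)" for j
  define B where "B j = (if j = 0 then (\<lambda>j. (\<Sum>l<b. W1 0 j l * c0 l) + b1 0 j) else b1 j)" for j
  have C: "layers \<sigma> d' W B (Suc j) x = layers \<sigma> d W1 b1 (Suc j) (affine_map a b W0 c0 x)" for j x
  proof (induct j)
    case 0 then show ?case by (simp add: d'_def W_def B_def affine_comp L(2))
  next
    case (Suc j)
    have eqs: "d' (Suc i) = d (Suc i)" "W (Suc i) = W1 (Suc i)" "B (Suc i) = b1 (Suc i)" for i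
      by (simp_all add: d'_def W_def B_def)
    have "layers \<sigma> d' W B (Suc (Suc j)) x = act \<sigma> (d' (Suc (Suc j)))
       (affine_map (d' (Suc j)) (d' (Suc (Suc j))) (W (Suc j)) (B (Suc j)) (layers \<sigma> d' W B (Suc j) x))"
      by (simp only: layers.simps)
    also have "\<dots> = act \<sigma> (d (Suc (Suc j)))
       (affine_map (d (Suc j)) (d (Suc (Suc j))) (W1 (Suc j)) (b1 (Suc j)) (layers \<sigma> d W1 b1 (Suc j) (affine_map a b W0 c0 x)))"
      by (simp only: eqs Suc)
    also have "\<dots> = layers \<sigma> d W1 b1 (Suc (Suc j)) (affine_map a b W0 c0 x)"
      by (simp only: layers.simps)
    finally show ?case .
  qed
  obtain j where j: "L = Suc j" using L(1) by (cases L) auto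
  show ?thesis unfolding is_deep_net_def
  proof (intro exI[of _ L] exI[of _ d'] exI[of _ W] exI[of _ B] conjI)
    show "\<forall>i\<in>{1..L}. 1 \<le> d' i \<and> d' i \<le> k" using L(3) by (auto simp: d'_def)
    show "(\<lambda>x. \<Phi> (affine_map a b W0 c0 x)) =
      (\<lambda>x. affine_map (d' L) c (W L) (B L) (layers \<sigma> d' W B L x))"
      unfolding P j C by (simp add: d'_def W_def B_def)
  qed (use L in \<open>auto simp: d'_def\<close>)
qed

lemma net_single:
  assumes "1 \<le> h" "h \<le> k"
  shows "is_deep_net \<sigma> a k b (\<lambda>x. affine_map h b W2 c2 (act \<sigma> h (affine_map a h W1 c1 x)))"
  unfolding is_deep_net_def
  by (rule exI[of _ 1], rule exI[of _ "\<lambda>j. if j = 0 then a else h"],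
      rule exI[of _ "\<lambda>j. if j = 0 then W1 else W2"], rule exI[of _ "\<lambda>j. if j = 0 then c1 else c2"])
     (use assms in auto)

definition bx :: "nat \<Rightarrow> real \<Rightarrow> (nat \<Rightarrow> real) set" where
  "bx s R = {x. (\<forall>i. s \<le> i \<longrightarrow> x i = 0) \<and> (\<forall>i<s. \<bar>x i\<bar> \<le> R)}"

definition AP :: "(real \<Rightarrow> real) \<Rightarrow> nat \<Rightarrow> ((nat \<Rightarrow> real) \<Rightarrow> (nat \<Rightarrow> real)) \<Rightarrow> bool" where
  "AP \<sigma> s G \<longleftrightarrow> (\<forall>R \<epsilon>. 0 < \<epsilon> \<longrightarrow> (\<exists>\<Phi>. is_deep_net \<sigma> s (Suc s) s \<Phi> \<and>
      (\<forall>x\<in>bx s R. \<forall>i<s. \<bar>\<Phi> x i - G x i\<bar> < \<epsilon>)))"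

definition good :: "nat \<Rightarrow> ((nat \<Rightarrow> real) \<Rightarrow> (nat \<Rightarrow> real)) \<Rightarrow> bool" where
  "good s G \<longleftrightarrow> (\<forall>R. \<exists>R'. \<forall>x\<in>bx s R. G x \<in> bx s R') \<and>
     (\<forall>R \<epsilon>. 0 < \<epsilon> \<longrightarrow> (\<exists>\<delta>>0. \<forall>x\<in>bx s R. \<forall>y\<in>bx s R.
        (\<forall>i<s. \<bar>x i - y i\<bar> < \<delta>) \<longrightarrow> (\<forall>i<s. \<bar>G x i - G y i\<bar> < \<epsilon>)))"

definition ucb :: "nat \<Rightarrow> ((nat \<Rightarrow> real) \<Rightarrow> real) \<Rightarrow> bool" where
  "ucb s F \<longleftrightarrow> (\<forall>R. \<exists>M. \<forall>x\<in>bx s R. \<bar>F x\<bar> \<le> M) \<and>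
     (\<forall>R \<epsilon>. 0 < \<epsilon> \<longrightarrow> (\<exists>\<delta>>0. \<forall>x\<in>bx s R. \<forall>y\<in>bx s R.
        (\<forall>i<s. \<bar>x i - y i\<bar> < \<delta>) \<longrightarrow> \<bar>F x - F y\<bar> < \<epsilon>))"

lemma APD: "AP \<sigma> s G \<Longrightarrow> 0 < \<epsilon> \<Longrightarrow> \<exists>\<Phi>. is_deep_net \<sigma> s (Suc s) s \<Phi> \<and>
      (\<forall>x\<in>bx s R. \<forall>i<s. \<bar>\<Phi> x i - G x i\<bar> < \<epsilon>)"
  unfolding AP_def by blast

lemma goodD1: "good s G \<Longrightarrow> \<exists>R'. \<forall>x\<in>bx s R. G x \<in> bx s R'"
  unfolding good_def by blast

lemma goodD2: "good s G \<Longrightarrow> 0 < \<epsilon> \<Longrightarrow> \<exists>\<delta>>0. \<forall>x\<in>bx s R. \<forall>y\<in>bx s R.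
        (\<forall>i<s. \<bar>x i - y i\<bar> < \<delta>) \<longrightarrow> (\<forall>i<s. \<bar>G x i - G y i\<bar> < \<epsilon>)"
  unfolding good_def by blast

lemma ucbD1: "ucb s F \<Longrightarrow> \<exists>M. \<forall>x\<in>bx s R. \<bar>F x\<bar> \<le> M"
  unfolding ucb_def by blast

lemma ucbD2: "ucb s F \<Longrightarrow> 0 < \<epsilon> \<Longrightarrow> \<exists>\<delta>>0. \<forall>x\<in>bx s R. \<forall>y\<in>bx s R.
        (\<forall>i<s. \<bar>x i - y i\<bar> < \<delta>) \<longrightarrow> \<bar>F x - F y\<bar> < \<epsilon>"
  unfolding ucb_def by blast

lemma bx_mono: "x \<in> bx s R \<Longrightarrow> R \<le> R' \<Longrightarrow> x \<in> bx s R'"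
  unfolding bx_def by force

lemma AP_comp:
  assumes A1: "AP \<sigma> s G1" and A2: "AP \<sigma> s G2" and g1: "good s G1" and g2: "good s G2"
  shows "AP \<sigma> s (\<lambda>x. G2 (G1 x))"
  unfolding AP_def
proof (intro allI impI)
  fix R \<epsilon> :: real assume e: "0 < \<epsilon>"
  obtain R' where R': "\<And>x. x \<in> bx s R \<Longrightarrow> G1 x \<in> bx s R'" using goodD1[OF g1] by blast
  have e2: "0 < \<epsilon>/2" using e by simp
  have "\<exists>\<delta>>0. \<forall>x\<in>bx s (R'+1). \<forall>y\<in>bx s (R'+1).
        (\<forall>i<s. \<bar>x i - y i\<bar> < \<delta>) \<longrightarrow> (\<forall>i<s. \<bar>G2 x i - G2 y i\<bar> < \<epsilon>/2)"
    using goodD2[OF g2 e2] by blast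
  then obtain \<delta> where d: "\<delta> > 0" and uc: "\<And>x y. x\<in>bx s (R'+1) \<Longrightarrow> y\<in>bx s (R'+1) \<Longrightarrow>
        (\<forall>i<s. \<bar>x i - y i\<bar> < \<delta>) \<Longrightarrow> (\<forall>i<s. \<bar>G2 x i - G2 y i\<bar> < \<epsilon>/2)"
    by blast
  have m: "0 < min \<delta> 1" using d by simp
  obtain \<Phi>1 where N1: "is_deep_net \<sigma> s (Suc s) s \<Phi>1" and P1: "\<forall>x\<in>bx s R. \<forall>i<s. \<bar>\<Phi>1 x i - G1 x i\<bar> < min \<delta> 1"
    using APD[OF A1 m] by blast
  obtain \<Phi>2 where N2: "is_deep_net \<sigma> s (Suc s) s \<Phi>2" and P2: "\<forall>x\<in>bx s (R'+1). \<forall>i<s. \<bar>\<Phi>2 x i - G2 x i\<bar> < \<epsilon>/2"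
    using APD[OF A2 e2] by blast
  show "\<exists>\<Phi>. is_deep_net \<sigma> s (Suc s) s \<Phi> \<and> (\<forall>x\<in>bx s R. \<forall>i<s. \<bar>\<Phi> x i - G2 (G1 x) i\<bar> < \<epsilon>)"
  proof (intro exI conjI ballI allI impI)
    show "is_deep_net \<sigma> s (Suc s) s (\<lambda>x. \<Phi>2 (\<Phi>1 x))" by (rule net_comp[OF N2 N1])
    fix x i assume x: "x \<in> bx s R" and i: "i < s"
    have G1x: "G1 x \<in> bx s R'" using R'[OF x] .
    have G1x': "G1 x \<in> bx s (R'+1)" using G1x by (rule bx_mono) simp
    have Px: "\<Phi>1 x \<in> bx s (R'+1)"
      unfolding bx_def
    proof (intro CollectI conjI allI impI)
      fix j assume "s \<le> j" then show "\<Phi>1 x j = 0" using net_out_zero[OF N1] by blast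
    next
      fix j assume j: "j < s"
      have "\<bar>G1 x j\<bar> \<le> R'" using G1x j unfolding bx_def by blast
      moreover have "\<bar>\<Phi>1 x j - G1 x j\<bar> < min \<delta> 1" using P1 x j by blast
      moreover have "min \<delta> 1 \<le> 1" by simp
      ultimately show "\<bar>\<Phi>1 x j\<bar> \<le> R' + 1" by linarith
    qed
    have a: "\<bar>\<Phi>2 (\<Phi>1 x) i - G2 (\<Phi>1 x) i\<bar> < \<epsilon>/2" using P2 Px i by blast
    have "\<forall>j<s. \<bar>\<Phi>1 x j - G1 x j\<bar> < \<delta>"
    proof (intro allI impI)
      fix j assume "j < s"
      then have "\<bar>\<Phi>1 x j - G1 x j\<bar> < min \<delta> 1" using P1 x by blast
      then show "\<bar>\<Phi>1 x j - G1 x j\<bar> < \<delta>" by linarith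
    qed
    then have b: "\<bar>G2 (\<Phi>1 x) i - G2 (G1 x) i\<bar> < \<epsilon>/2" using uc[OF Px G1x'] i by blast
    show "\<bar>\<Phi>2 (\<Phi>1 x) i - G2 (G1 x) i\<bar> < \<epsilon>" using a b by linarith
  qed
qed

lemma good_comp:
  assumes g1: "good s G1" and g2: "good s G2"
  shows "good s (\<lambda>x. G2 (G1 x))"
  unfolding good_def
proof (intro conjI allI impI)
  fix R
  obtain R1 where R1: "\<And>x. x \<in> bx s R \<Longrightarrow> G1 x \<in> bx s R1" using goodD1[OF g1] by blast
  obtain R2 where R2: "\<And>x. x \<in> bx s R1 \<Longrightarrow> G2 x \<in> bx s R2" using goodD1[OF g2] by blast
  have "\<forall>x\<in>bx s R. G2 (G1 x) \<in> bx s R2" using R1 R2 by blast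
  then show "\<exists>R'. \<forall>x\<in>bx s R. G2 (G1 x) \<in> bx s R'" by blast
next
  fix R \<epsilon> :: real assume e: "0 < \<epsilon>"
  obtain R1 where R1: "\<And>x. x \<in> bx s R \<Longrightarrow> G1 x \<in> bx s R1" using goodD1[OF g1] by blast
  have "\<exists>\<delta>2>0. \<forall>x\<in>bx s R1. \<forall>y\<in>bx s R1.
        (\<forall>i<s. \<bar>x i - y i\<bar> < \<delta>2) \<longrightarrow> (\<forall>i<s. \<bar>G2 x i - G2 y i\<bar> < \<epsilon>)"
    using goodD2[OF g2 e] by blast
  then obtain \<delta>2 where d2: "\<delta>2 > 0" and uc2: "\<forall>x\<in>bx s R1. \<forall>y\<in>bx s R1.
        (\<forall>i<s. \<bar>x i - y i\<bar> < \<delta>2) \<longrightarrow> (\<forall>i<s. \<bar>G2 x i - G2 y i\<bar> < \<epsilon>)"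
    by blast
  have "\<exists>\<delta>1>0. \<forall>x\<in>bx s R. \<forall>y\<in>bx s R.
        (\<forall>i<s. \<bar>x i - y i\<bar> < \<delta>1) \<longrightarrow> (\<forall>i<s. \<bar>G1 x i - G1 y i\<bar> < \<delta>2)"
    using goodD2[OF g1 d2] by blast
  then obtain \<delta>1 where d1: "\<delta>1 > 0" and uc1: "\<forall>x\<in>bx s R. \<forall>y\<in>bx s R.
        (\<forall>i<s. \<bar>x i - y i\<bar> < \<delta>1) \<longrightarrow> (\<forall>i<s. \<bar>G1 x i - G1 y i\<bar> < \<delta>2)"
    by blast
  show "\<exists>\<delta>>0. \<forall>x\<in>bx s R. \<forall>y\<in>bx s R. (\<forall>i<s. \<bar>x i - y i\<bar> < \<delta>) \<longrightarrow>
          (\<forall>i<s. \<bar>G2 (G1 x) i - G2 (G1 y) i\<bar> < \<epsilon>)"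
  proof (intro exI[of _ \<delta>1] conjI ballI impI allI d1)
    fix x y i assume x: "x \<in> bx s R" and y: "y \<in> bx s R" and c: "\<forall>i<s. \<bar>x i - y i\<bar> < \<delta>1" and i: "i < s"
    have "\<forall>i<s. \<bar>G1 x i - G1 y i\<bar> < \<delta>2" using uc1 x y c by blast
    moreover have "G1 x \<in> bx s R1" "G1 y \<in> bx s R1" using R1 x y by blast+
    ultimately have "\<forall>i<s. \<bar>G2 (G1 x) i - G2 (G1 y) i\<bar> < \<epsilon>" using uc2 by blast
    then show "\<bar>G2 (G1 x) i - G2 (G1 y) i\<bar> < \<epsilon>" using i by blast
  qed
qed

lemma AP_limit:
  assumes "\<And>R \<epsilon>. 0 < \<epsilon> \<Longrightarrow> \<exists>G'. AP \<sigma> s G' \<and> (\<forall>x\<in>bx s R. \<forall>i<s. \<bar>G x i - G' x i\<bar> < \<epsilon>)"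
  shows "AP \<sigma> s G"
  unfolding AP_def
proof (intro allI impI)
  fix R \<epsilon> :: real assume e: "0 < \<epsilon>"
  have e2: "0 < \<epsilon>/2" using e by simp
  obtain G' where G': "AP \<sigma> s G'" and c: "\<forall>x\<in>bx s R. \<forall>i<s. \<bar>G x i - G' x i\<bar> < \<epsilon>/2"
    using assms[OF e2] by blast
  obtain \<Phi> where N: "is_deep_net \<sigma> s (Suc s) s \<Phi>" and P: "\<forall>x\<in>bx s R. \<forall>i<s. \<bar>\<Phi> x i - G' x i\<bar> < \<epsilon>/2"
    using APD[OF G' e2] by blast
  show "\<exists>\<Phi>. is_deep_net \<sigma> s (Suc s) s \<Phi> \<and> (\<forall>x\<in>bx s R. \<forall>i<s. \<bar>\<Phi> x i - G x i\<bar> < \<epsilon>)"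
  proof (intro exI conjI ballI allI impI)
    show "is_deep_net \<sigma> s (Suc s) s \<Phi>" by (rule N)
    fix x i assume "x \<in> bx s R" "i < s"
    then have "\<bar>G x i - G' x i\<bar> < \<epsilon>/2" "\<bar>\<Phi> x i - G' x i\<bar> < \<epsilon>/2" using c P by auto
    then show "\<bar>\<Phi> x i - G x i\<bar> < \<epsilon>" by linarith
  qed
qed

lemma bx_Rn: "x \<in> bx s R \<Longrightarrow> x \<in> Rn s"
  unfolding bx_def Rn_def by auto

lemma AP_cong:
  assumes A: "AP \<sigma> s G" and e: "\<And>x. x \<in> Rn s \<Longrightarrow> \<forall>i<s. G x i = G' x i"
  shows "AP \<sigma> s G'"
  unfolding AP_def
proof (intro allI impI)
  fix R \<epsilon> :: real assume "0 < \<epsilon>"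
  from APD[OF A this, of R] obtain \<Phi> where N: "is_deep_net \<sigma> s (Suc s) s \<Phi>"
    and P: "\<forall>x\<in>bx s R. \<forall>i<s. \<bar>\<Phi> x i - G x i\<bar> < \<epsilon>" by blast
  have "\<forall>x\<in>bx s R. \<forall>i<s. \<bar>\<Phi> x i - G' x i\<bar> < \<epsilon>"
  proof (intro ballI allI impI)
    fix x i assume x: "x \<in> bx s R" and i: "i < s"
    have "G x i = G' x i" using e[OF bx_Rn[OF x]] i by blast
    moreover have "\<bar>\<Phi> x i - G x i\<bar> < \<epsilon>" using P x i by blast
    ultimately show "\<bar>\<Phi> x i - G' x i\<bar> < \<epsilon>" by simp
  qed
  with N show "\<exists>\<Phi>. is_deep_net \<sigma> s (Suc s) s \<Phi> \<and> (\<forall>x\<in>bx s R. \<forall>i<s. \<bar>\<Phi> x i - G' x i\<bar> < \<epsilon>)"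
    by blast
qed

lemma good_cong:
  assumes g: "good s G" and e: "\<And>x. x \<in> Rn s \<Longrightarrow> G x = G' x"
  shows "good s G'"
  unfolding good_def
proof (intro conjI allI impI)
  fix R
  from goodD1[OF g, of R] obtain R' where "\<forall>x\<in>bx s R. G x \<in> bx s R'" by blast
  then have "\<forall>x\<in>bx s R. G' x \<in> bx s R'" using e[OF bx_Rn] by simp
  then show "\<exists>R'. \<forall>x\<in>bx s R. G' x \<in> bx s R'" by blast
next
  fix R \<epsilon> :: real assume "0 < \<epsilon>"
  from goodD2[OF g this, of R] obtain \<delta> where d: "\<delta> > 0" and P: "\<forall>x\<in>bx s R. \<forall>y\<in>bx s R.
        (\<forall>i<s. \<bar>x i - y i\<bar> < \<delta>) \<longrightarrow> (\<forall>i<s. \<bar>G x i - G y i\<bar> < \<epsilon>)" by blast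
  have "\<forall>x\<in>bx s R. \<forall>y\<in>bx s R.
        (\<forall>i<s. \<bar>x i - y i\<bar> < \<delta>) \<longrightarrow> (\<forall>i<s. \<bar>G' x i - G' y i\<bar> < \<epsilon>)"
  proof (intro ballI impI)
    fix x y assume x: "x \<in> bx s R" and y: "y \<in> bx s R" and c: "\<forall>i<s. \<bar>x i - y i\<bar> < \<delta>"
    have "G' x = G x" "G' y = G y" using e[OF bx_Rn[OF x]] e[OF bx_Rn[OF y]] by simp_all
    then show "\<forall>i<s. \<bar>G' x i - G' y i\<bar> < \<epsilon>" using P x y c by simp
  qed
  with d show "\<exists>\<delta>>0. \<forall>x\<in>bx s R. \<forall>y\<in>bx s R.
        (\<forall>i<s. \<bar>x i - y i\<bar> < \<delta>) \<longrightarrow> (\<forall>i<s. \<bar>G' x i - G' y i\<bar> < \<epsilon>)" by blast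
qed

lemma ucb_const: "ucb s (\<lambda>x. c)"
  unfolding ucb_def
proof (intro conjI allI impI)
  fix R show "\<exists>M. \<forall>x\<in>bx s R. \<bar>c\<bar> \<le> M" by blast
next
  fix R \<epsilon> :: real assume "0 < \<epsilon>"
  then show "\<exists>\<delta>>0. \<forall>x\<in>bx s R. \<forall>y\<in>bx s R. (\<forall>i<s. \<bar>x i - y i\<bar> < \<delta>) \<longrightarrow> \<bar>c - c\<bar> < \<epsilon>"
    by (intro exI[of _ 1]) simp
qed

lemma ucb_coord: "ucb s (\<lambda>x. x j)"
  unfolding ucb_def
proof (intro conjI allI impI)
  fix R
  have "\<bar>x j\<bar> \<le> \<bar>R\<bar>" if x: "x \<in> bx s R" for x
  proof (cases "j < s")
    case True then have "\<bar>x j\<bar> \<le> R" using x unfolding bx_def by blast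
    then show ?thesis by linarith
  next
    case False then have "x j = 0" using x unfolding bx_def by auto
    then show ?thesis by simp
  qed
  then show "\<exists>M. \<forall>x\<in>bx s R. \<bar>x j\<bar> \<le> M" by blast
next
  fix R \<epsilon> :: real assume e: "0 < \<epsilon>"
  have "\<bar>x j - y j\<bar> < \<epsilon>" if x: "x \<in> bx s R" and y: "y \<in> bx s R" and c: "\<forall>i<s. \<bar>x i - y i\<bar> < \<epsilon>" for x y
  proof (cases "j < s")
    case True then show ?thesis using c by blast
  next
    case False then have "x j = 0" "y j = 0" using x y unfolding bx_def by auto
    then show ?thesis using e by simp
  qed
  then show "\<exists>\<delta>>0. \<forall>x\<in>bx s R. \<forall>y\<in>bx s R. (\<forall>i<s. \<bar>x i - y i\<bar> < \<delta>) \<longrightarrow> \<bar>x j - y j\<bar> < \<epsilon>"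
    using e by blast
qed

lemma ucb_add:
  assumes F: "ucb s F" and G: "ucb s G" shows "ucb s (\<lambda>x. F x + G x)"
  unfolding ucb_def
proof (intro conjI allI impI)
  fix R
  obtain M1 where M1: "\<forall>x\<in>bx s R. \<bar>F x\<bar> \<le> M1" using ucbD1[OF F] by blast
  obtain M2 where M2: "\<forall>x\<in>bx s R. \<bar>G x\<bar> \<le> M2" using ucbD1[OF G] by blast
  have "\<bar>F x + G x\<bar> \<le> M1 + M2" if "x \<in> bx s R" for x
  proof -
    have "\<bar>F x\<bar> \<le> M1" "\<bar>G x\<bar> \<le> M2" using M1 M2 that by blast+
    then show ?thesis by linarith
  qed
  then show "\<exists>M. \<forall>x\<in>bx s R. \<bar>F x + G x\<bar> \<le> M" by blast
next
  fix R \<epsilon> :: real assume e: "0 < \<epsilon>"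
  have e2: "0 < \<epsilon>/2" using e by simp
  obtain d1 where d1: "d1 > 0" "\<forall>x\<in>bx s R. \<forall>y\<in>bx s R. (\<forall>i<s. \<bar>x i - y i\<bar> < d1) \<longrightarrow> \<bar>F x - F y\<bar> < \<epsilon>/2"
    using ucbD2[OF F e2] by blast
  obtain d2 where d2: "d2 > 0" "\<forall>x\<in>bx s R. \<forall>y\<in>bx s R. (\<forall>i<s. \<bar>x i - y i\<bar> < d2) \<longrightarrow> \<bar>G x - G y\<bar> < \<epsilon>/2"
    using ucbD2[OF G e2] by blast
  have "\<bar>F x + G x - (F y + G y)\<bar> < \<epsilon>"
    if x: "x \<in> bx s R" and y: "y \<in> bx s R" and c: "\<forall>i<s. \<bar>x i - y i\<bar> < min d1 d2" for x y
  proof -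
    have "\<forall>i<s. \<bar>x i - y i\<bar> < d1" "\<forall>i<s. \<bar>x i - y i\<bar> < d2" using c by auto
    then have "\<bar>F x - F y\<bar> < \<epsilon>/2" "\<bar>G x - G y\<bar> < \<epsilon>/2" using d1(2) d2(2) x y by blast+
    then show ?thesis by linarith
  qed
  moreover have "0 < min d1 d2" using d1 d2 by simp
  ultimately show "\<exists>\<delta>>0. \<forall>x\<in>bx s R. \<forall>y\<in>bx s R. (\<forall>i<s. \<bar>x i - y i\<bar> < \<delta>) \<longrightarrow> \<bar>F x + G x - (F y + G y)\<bar> < \<epsilon>"
    by blast
qed

lemma ucb_compose:
  assumes g: "continuous_on UNIV g" and F: "ucb s F"
  shows "ucb s (\<lambda>x. g (F x))"
  unfolding ucb_def
proof (intro conjI allI impI)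
  fix R
  obtain M where M: "\<forall>x\<in>bx s R. \<bar>F x\<bar> \<le> M" using ucbD1[OF F] by blast
  have "compact (g ` {-M..M})" by (rule compact_continuous_image) (auto intro: continuous_on_subset[OF g])
  then have "bounded (g ` {-M..M})" by (rule compact_imp_bounded)
  then obtain B where B: "\<forall>y\<in>g ` {-M..M}. norm y \<le> B" unfolding bounded_iff by blast
  have "\<bar>g (F x)\<bar> \<le> B" if x: "x \<in> bx s R" for x
  proof -
    have "\<bar>F x\<bar> \<le> M" using M x by blast
    then have "F x \<in> {-M..M}" by (simp add: abs_le_iff)
    then show ?thesis using B by force
  qed
  then have "\<forall>x\<in>bx s R. \<bar>g (F x)\<bar> \<le> B" by blast
  then show "\<exists>M. \<forall>x\<in>bx s R. \<bar>g (F x)\<bar> \<le> M" by blast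
next
  fix R \<epsilon> :: real assume e: "0 < \<epsilon>"
  obtain M where M: "\<forall>x\<in>bx s R. \<bar>F x\<bar> \<le> M" using ucbD1[OF F] by blast
  have "uniformly_continuous_on {-M..M} g"
    by (rule compact_uniformly_continuous) (auto intro: continuous_on_subset[OF g])
  then obtain \<eta> where \<eta>: "\<eta> > 0" and ug: "\<And>a b. a \<in> {-M..M} \<Longrightarrow> b \<in> {-M..M} \<Longrightarrow> dist a b < \<eta> \<Longrightarrow> dist (g a) (g b) < \<epsilon>"
    unfolding uniformly_continuous_on_def using e by metis
  obtain \<delta> where d: "\<delta> > 0" and uF: "\<forall>x\<in>bx s R. \<forall>y\<in>bx s R. (\<forall>i<s. \<bar>x i - y i\<bar> < \<delta>) \<longrightarrow> \<bar>F x - F y\<bar> < \<eta>"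
    using ucbD2[OF F \<eta>] by blast
  show "\<exists>\<delta>>0. \<forall>x\<in>bx s R. \<forall>y\<in>bx s R. (\<forall>i<s. \<bar>x i - y i\<bar> < \<delta>) \<longrightarrow> \<bar>g (F x) - g (F y)\<bar> < \<epsilon>"
  proof (intro exI[of _ \<delta>] conjI ballI impI d)
    fix x y assume x: "x \<in> bx s R" and y: "y \<in> bx s R" and c: "\<forall>i<s. \<bar>x i - y i\<bar> < \<delta>"
    have "\<bar>F x\<bar> \<le> M" "\<bar>F y\<bar> \<le> M" using M x y by blast+
    then have "F x \<in> {-M..M}" "F y \<in> {-M..M}" by (simp_all add: abs_le_iff)
    moreover have "\<bar>F x - F y\<bar> < \<eta>" using uF x y c by blast
    then have "dist (F x) (F y) < \<eta>" by (simp add: dist_real_def)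
    ultimately show "\<bar>g (F x) - g (F y)\<bar> < \<epsilon>" using ug by (simp add: dist_real_def)
  qed
qed

lemma ucb_mult:
  assumes F: "ucb s F" and G: "ucb s G"
  shows "ucb s (\<lambda>x. F x * G x)"
proof -
  have sq: "ucb s (\<lambda>x. (H x)^2)" if "ucb s H" for H
    by (rule ucb_compose[OF _ that]) (auto intro!: continuous_intros)
  have neg: "ucb s (\<lambda>x. - H x)" if "ucb s H" for H
    by (rule ucb_compose[OF _ that]) (auto intro!: continuous_intros)
  have half: "ucb s (\<lambda>x. H x / 4)" if "ucb s H" for H
    by (rule ucb_compose[OF _ that]) (auto intro!: continuous_intros)
  have "ucb s (\<lambda>x. ((F x + G x)^2 + - ((F x + - G x)^2)) / 4)"
    by (intro half ucb_add sq neg F G)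
  moreover have "((F x + G x)^2 + - ((F x + - G x)^2)) / 4 = F x * G x" for x
    by (simp add: power2_eq_square algebra_simps)
  ultimately show ?thesis by simp
qed

lemma ucb_sum:
  fixes N :: nat
  assumes "\<And>i. ucb s (F i)"
  shows "ucb s (\<lambda>x. \<Sum>i<N. F i x)"
proof (induct N)
  case 0 then show ?case by (simp add: ucb_const)
next
  case (Suc N) then show ?case by (simp add: ucb_add assms)
qed

lemma good_id: "good s (\<lambda>x. x)"
  unfolding good_def by blast

lemma good_upd:
  assumes g: "good s G" and F: "ucb s F" and p: "p < s"
  shows "good s (\<lambda>x. (G x)(p := F x))"
  unfolding good_def
proof (intro conjI allI impI)
  fix R
  obtain R' where R': "\<forall>x\<in>bx s R. G x \<in> bx s R'" using goodD1[OF g] by blast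
  obtain M where M: "\<forall>x\<in>bx s R. \<bar>F x\<bar> \<le> M" using ucbD1[OF F] by blast
  show "\<exists>R'. \<forall>x\<in>bx s R. (G x)(p := F x) \<in> bx s R'"
  proof (intro exI[of _ "max R' M"] ballI)
    fix x assume x: "x \<in> bx s R"
    have Gx: "G x \<in> bx s R'" using R' x by blast
    have Fx: "\<bar>F x\<bar> \<le> M" using M x by blast
    show "(G x)(p := F x) \<in> bx s (max R' M)"
      unfolding bx_def
    proof (intro CollectI conjI allI impI)
      fix i assume "s \<le> i" then show "((G x)(p := F x)) i = 0" using Gx p unfolding bx_def by auto
    next
      fix i assume i: "i < s"
      show "\<bar>((G x)(p := F x)) i\<bar> \<le> max R' M"
      proof (cases "i = p")
        case True then show ?thesis using Fx by simp
      next
        case False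
        have "\<bar>G x i\<bar> \<le> R'" using Gx i unfolding bx_def by blast
        then show ?thesis using False by simp
      qed
    qed
  qed
next
  fix R \<epsilon> :: real assume e: "0 < \<epsilon>"
  obtain d1 where d1: "d1 > 0" "\<forall>x\<in>bx s R. \<forall>y\<in>bx s R. (\<forall>i<s. \<bar>x i - y i\<bar> < d1) \<longrightarrow> (\<forall>i<s. \<bar>G x i - G y i\<bar> < \<epsilon>)"
    using goodD2[OF g e] by blast
  obtain d2 where d2: "d2 > 0" "\<forall>x\<in>bx s R. \<forall>y\<in>bx s R. (\<forall>i<s. \<bar>x i - y i\<bar> < d2) \<longrightarrow> \<bar>F x - F y\<bar> < \<epsilon>"
    using ucbD2[OF F e] by blast
  show "\<exists>\<delta>>0. \<forall>x\<in>bx s R. \<forall>y\<in>bx s R. (\<forall>i<s. \<bar>x i - y i\<bar> < \<delta>) \<longrightarrow>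
     (\<forall>i<s. \<bar>((G x)(p := F x)) i - ((G y)(p := F y)) i\<bar> < \<epsilon>)"
  proof (intro exI[of _ "min d1 d2"] conjI ballI impI allI)
    show "0 < min d1 d2" using d1 d2 by simp
    fix x y i assume x: "x \<in> bx s R" and y: "y \<in> bx s R" and c: "\<forall>i<s. \<bar>x i - y i\<bar> < min d1 d2" and i: "i < s"
    have c1: "\<forall>i<s. \<bar>x i - y i\<bar> < d1" "\<forall>i<s. \<bar>x i - y i\<bar> < d2" using c by auto
    show "\<bar>((G x)(p := F x)) i - ((G y)(p := F y)) i\<bar> < \<epsilon>"
    proof (cases "i = p")
      case True
      have "\<bar>F x - F y\<bar> < \<epsilon>" using d2(2) x y c1(2) by blast
      then show ?thesis using True by simp
    next
      case False
      have "\<forall>i<s. \<bar>G x i - G y i\<bar> < \<epsilon>" using d1(2) x y c1(1) by blast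
      then show ?thesis using False i by simp
    qed
  qed
qed

definition AIdent :: "(real \<Rightarrow> real) \<Rightarrow> real \<Rightarrow> real \<Rightarrow> bool" where
  "AIdent \<sigma> t0 D \<longleftrightarrow> D \<noteq> 0 \<and> (\<forall>R \<eta>. 0 < \<eta> \<longrightarrow> (\<exists>h. h \<noteq> 0 \<and>
      (\<forall>u. \<bar>u\<bar> \<le> R \<longrightarrow> \<bar>(\<sigma> (h*u + t0) - \<sigma> t0) / (h*D) - u\<bar> \<le> \<eta>)))"

lemma mvt_sym:
  fixes f f' :: "real \<Rightarrow> real"
  assumes D: "\<And>x. \<bar>x - a\<bar> \<le> \<bar>d\<bar> \<Longrightarrow> (f has_real_derivative f' x) (at x)"
  shows "\<exists>z. \<bar>z - a\<bar> \<le> \<bar>d\<bar> \<and> f (a + d) - f a = d * f' z"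
proof (cases "0 < d")
  case True
  have "\<exists>z>a. z < a + d \<and> f (a + d) - f a = (a + d - a) * f' z"
    by (rule MVT2) (use True D in auto)
  then show ?thesis by force
next
  case False
  show ?thesis
  proof (cases "d = 0")
    case True then show ?thesis by (intro exI[of _ a]) simp
  next
    case False
    with \<open>\<not> 0 < d\<close> have d: "d < 0" by simp
    have "\<exists>z>a+d. z < a \<and> f a - f (a + d) = (a - (a + d)) * f' z"
      by (rule MVT2) (use d D in auto)
    then obtain z where "a + d < z" "z < a" "f a - f (a + d) = (a - (a + d)) * f' z" by blast
    then show ?thesis using d by (intro exI[of _ z]) (auto simp: algebra_simps)
  qed
qed

lemma AIdent_deriv:
  fixes \<sigma> :: "real \<Rightarrow> real"
  assumes U: "open U" "t0 \<in> U" and dif: "\<forall>t\<in>U. \<sigma> differentiable (at t)"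
    and ic: "isCont (deriv \<sigma>) t0" and D0: "deriv \<sigma> t0 \<noteq> 0"
  shows "AIdent \<sigma> t0 (deriv \<sigma> t0)"
  unfolding AIdent_def
proof (intro conjI allI impI D0)
  fix R \<eta> :: real assume e: "0 < \<eta>"
  define D where "D = deriv \<sigma> t0"
  obtain r where r: "r > 0" "ball t0 r \<subseteq> U" using U open_contains_ball by blast
  define R1 where "R1 = \<bar>R\<bar> + 1"
  have R1: "0 < R1" unfolding R1_def by simp
  define \<eta>' where "\<eta>' = \<eta> * \<bar>D\<bar> / R1"
  have \<eta>': "0 < \<eta>'" unfolding \<eta>'_def using e D0 R1 by (simp add: D_def)
  have "\<forall>r>0. \<exists>s>0. \<forall>x. x \<noteq> t0 \<and> norm (x - t0) < s \<longrightarrow> norm (deriv \<sigma> x - deriv \<sigma> t0) < r"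
    using ic unfolding isCont_def LIM_eq by blast
  then obtain \<rho> where \<rho>: "\<rho> > 0" and \<rho>1: "\<forall>x. x \<noteq> t0 \<and> \<bar>x - t0\<bar> < \<rho> \<longrightarrow> \<bar>deriv \<sigma> x - D\<bar> < \<eta>'"
    using \<eta>' unfolding D_def by auto
  have \<rho>2: "\<bar>deriv \<sigma> x - D\<bar> \<le> \<eta>'" if "\<bar>x - t0\<bar> < \<rho>" for x
    using \<rho>1 that \<eta>' by (cases "x = t0") (auto simp: D_def)
  define h where "h = min r \<rho> / (2 * R1)"
  have h0: "0 < h" unfolding h_def using r \<rho> R1 by simp
  have hR: "h * R1 < min r \<rho>" unfolding h_def using r \<rho> R1 by (auto simp: field_simps min_def)
  show "\<exists>h. h \<noteq> 0 \<and> (\<forall>u. \<bar>u\<bar> \<le> R \<longrightarrow> \<bar>(\<sigma> (h*u + t0) - \<sigma> t0) / (h * deriv \<sigma> t0) - u\<bar> \<le> \<eta>)"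
  proof (intro exI[of _ h] conjI allI impI)
    show "h \<noteq> 0" using h0 by simp
    fix u :: real assume u: "\<bar>u\<bar> \<le> R"
    have uR: "\<bar>u\<bar> \<le> R1" using u unfolding R1_def by simp
    have hu: "\<bar>h*u\<bar> < min r \<rho>"
    proof -
      have "\<bar>h*u\<bar> = h * \<bar>u\<bar>" using h0 by (simp add: abs_mult)
      also have "\<dots> \<le> h * R1" using uR h0 by (simp add: mult_left_mono)
      finally show ?thesis using hR by linarith
    qed
    have "\<exists>z. \<bar>z - t0\<bar> \<le> \<bar>h*u\<bar> \<and> \<sigma> (t0 + h*u) - \<sigma> t0 = (h*u) * deriv \<sigma> z"
    proof (rule mvt_sym)
      fix x assume "\<bar>x - t0\<bar> \<le> \<bar>h*u\<bar>"
      then have "x \<in> ball t0 r" using hu by (simp add: dist_real_def abs_minus_commute)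
      then have "\<sigma> differentiable (at x)" using dif r by blast
      then show "(\<sigma> has_real_derivative deriv \<sigma> x) (at x)"
        by (simp add: DERIV_deriv_iff_real_differentiable)
    qed
    then obtain z where z: "\<bar>z - t0\<bar> \<le> \<bar>h*u\<bar>" and eq: "\<sigma> (h*u + t0) - \<sigma> t0 = (h*u) * deriv \<sigma> z"
      by (auto simp: add.commute)
    have zc: "\<bar>deriv \<sigma> z - D\<bar> \<le> \<eta>'" using z hu by (intro \<rho>2) linarith
    have "(\<sigma> (h*u + t0) - \<sigma> t0) / (h * D) - u = u * (deriv \<sigma> z - D) / D"
      unfolding eq using h0 D0 by (simp add: D_def field_simps)
    then have "\<bar>(\<sigma> (h*u + t0) - \<sigma> t0) / (h * D) - u\<bar> = \<bar>u\<bar> * \<bar>deriv \<sigma> z - D\<bar> / \<bar>D\<bar>"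
      by (simp add: abs_mult abs_divide)
    also have "\<dots> \<le> R1 * \<eta>' / \<bar>D\<bar>"
      by (intro divide_right_mono mult_mono uR zc) (use R1 in auto)
    also have "\<dots> = \<eta>" unfolding \<eta>'_def using R1 D0 by (simp add: D_def)
    finally show "\<bar>(\<sigma> (h*u + t0) - \<sigma> t0) / (h * deriv \<sigma> t0) - u\<bar> \<le> \<eta>" by (simp add: D_def)
  qed
qed

lemma sum_delta_mult:
  fixes x :: "nat \<Rightarrow> real"
  assumes "j < s"
  shows "(\<Sum>i<s. (if i = j then a else 0) * x i) = a * x j"
proof -
  have "(\<Sum>i<s. (if i = j then a else 0) * x i) = (\<Sum>i<s. if i = j then a * x i else 0)"
    by (rule sum.cong) auto
  also have "\<dots> = a * x j" using assms by (simp add: sum.delta)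
  finally show ?thesis .
qed

definition opF :: "(real \<Rightarrow> real) \<Rightarrow> nat \<Rightarrow> (nat \<Rightarrow> real) \<Rightarrow> real \<Rightarrow> real \<Rightarrow> (nat \<Rightarrow> real) \<Rightarrow> real
   \<Rightarrow> (nat \<Rightarrow> real) \<Rightarrow> real" where
  "opF \<sigma> s A q c B e x = (\<Sum>i<s. A i * x i) + q + c * \<sigma> ((\<Sum>i<s. B i * x i) + e)"

lemma ucb_lin: "ucb s (\<lambda>x. \<Sum>i<s. A i * x i)"
  by (intro ucb_sum ucb_mult ucb_const ucb_coord)

lemma ucb_opF:
  assumes "continuous_on UNIV \<sigma>"
  shows "ucb s (opF \<sigma> s A q c B e)"
  unfolding opF_def[abs_def]
  by (intro ucb_add ucb_lin ucb_const ucb_mult ucb_compose[OF assms])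

lemma good_op:
  assumes "continuous_on UNIV \<sigma>" "p < s"
  shows "good s (\<lambda>x. x(p := opF \<sigma> s A q c B e x))"
  by (rule good_upd[OF good_id ucb_opF[OF assms(1)] assms(2)])

lemma AP_op:
  assumes AI: "AIdent \<sigma> t0 D" and p: "p < s"
  shows "AP \<sigma> s (\<lambda>x. x(p := opF \<sigma> s A q c B e x))"
  unfolding AP_def
proof (intro allI impI)
  fix R \<epsilon> :: real assume e0: "0 < \<epsilon>"
  define SA where "SA = (\<Sum>i<s. \<bar>A i\<bar>)"
  have SA0: "0 \<le> SA" unfolding SA_def by (simp add: sum_nonneg)
  define \<eta> where "\<eta> = \<epsilon> / (2 * (SA + 1))"
  have \<eta>0: "0 < \<eta>" unfolding \<eta>_def using e0 SA0 by simp
  have D0: "D \<noteq> 0" using AI unfolding AIdent_def by blast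
  obtain h where h0: "h \<noteq> 0" and hI: "\<And>u. \<bar>u\<bar> \<le> R \<Longrightarrow> \<bar>(\<sigma> (h*u + t0) - \<sigma> t0) / (h*D) - u\<bar> \<le> \<eta>"
    using AI \<eta>0 unfolding AIdent_def by blast
  define \<iota> where "\<iota> u = (\<sigma> (h*u + t0) - \<sigma> t0) / (h*D)" for u
  define W1 where "W1 = (\<lambda>j i. if j < s then (if i = j then h else 0) else B i)"
  define c1 where "c1 = (\<lambda>j. if j < s then t0 else e)"
  define W2 where "W2 = (\<lambda>i j. if i = p then (if j < s then A j / (h*D) else c)
                                      else (if j = i then 1 / (h*D) else 0))"
  define c2 where "c2 = (\<lambda>i. if i = p then q - (\<Sum>j<s. A j * \<sigma> t0) / (h*D) else - \<sigma> t0 / (h*D))"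
  define \<Phi> where "\<Phi> = (\<lambda>x. affine_map (Suc s) s W2 c2 (act \<sigma> (Suc s) (affine_map s (Suc s) W1 c1 x)))"
  have N: "is_deep_net \<sigma> s (Suc s) s \<Phi>" unfolding \<Phi>_def by (rule net_single) auto
  have val: "\<Phi> x i = (if i = p then (\<Sum>j<s. A j * \<iota> (x j)) + q + c * \<sigma> ((\<Sum>i<s. B i * x i) + e)
                    else \<iota> (x i))" if i: "i < s" for x i
  proof -
    define hid where "hid = act \<sigma> (Suc s) (affine_map s (Suc s) W1 c1 x)"
    have hj: "hid j = \<sigma> (h * x j + t0)" if "j < s" for j
      using that unfolding hid_def act_def affine_map_def W1_def c1_def by (simp add: sum_delta_mult)
    have hs: "hid s = \<sigma> ((\<Sum>i<s. B i * x i) + e)"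
      unfolding hid_def act_def affine_map_def W1_def c1_def by simp
    have "\<Phi> x i = (\<Sum>j<Suc s. W2 i j * hid j) + c2 i"
      unfolding \<Phi>_def hid_def[symmetric] using i by (simp add: affine_map_def)
    also have "\<dots> = (\<Sum>j<s. W2 i j * hid j) + W2 i s * hid s + c2 i" by simp
    finally have \<Phi>x: "\<Phi> x i = (\<Sum>j<s. W2 i j * hid j) + W2 i s * hid s + c2 i" .
    show ?thesis
    proof (cases "i = p")
      case True
      have "(\<Sum>j<s. W2 i j * hid j) = (\<Sum>j<s. A j / (h*D) * \<sigma> (h * x j + t0))"
        using True by (intro sum.cong) (auto simp: W2_def hj)
      moreover have "(\<Sum>j<s. A j * \<iota> (x j)) = (\<Sum>j<s. A j / (h*D) * \<sigma> (h * x j + t0)) - (\<Sum>j<s. A j * \<sigma> t0) / (h*D)"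
      proof -
        have "(\<Sum>j<s. A j * \<iota> (x j)) = (\<Sum>j<s. A j / (h*D) * \<sigma> (h * x j + t0) - A j * \<sigma> t0 / (h*D))"
          by (intro sum.cong refl) (use h0 D0 in \<open>simp add: \<iota>_def field_simps\<close>)
        also have "\<dots> = (\<Sum>j<s. A j / (h*D) * \<sigma> (h * x j + t0)) - (\<Sum>j<s. A j * \<sigma> t0) / (h*D)"
          by (simp add: sum_subtractf sum_divide_distrib)
        finally show ?thesis .
      qed
      ultimately show ?thesis using True \<Phi>x hs by (simp add: W2_def c2_def)
    next
      case False
      have "(\<Sum>j<s. W2 i j * hid j) = (\<Sum>j<s. (if j = i then 1 / (h*D) else 0) * hid j)"
        using False by (intro sum.cong) (auto simp: W2_def)
      also have "\<dots> = 1 / (h*D) * hid i" using i by (rule sum_delta_mult)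
      finally have "(\<Sum>j<s. W2 i j * hid j) = 1 / (h*D) * \<sigma> (h * x i + t0)" using hj[OF i] by simp
      moreover have "W2 i s = 0" using False i by (simp add: W2_def)
      ultimately show ?thesis using False \<Phi>x by (simp add: c2_def \<iota>_def diff_divide_distrib)
    qed
  qed
  show "\<exists>\<Phi>. is_deep_net \<sigma> s (Suc s) s \<Phi> \<and>
      (\<forall>x\<in>bx s R. \<forall>i<s. \<bar>\<Phi> x i - (x(p := opF \<sigma> s A q c B e x)) i\<bar> < \<epsilon>)"
  proof (intro exI[of _ \<Phi>] conjI N ballI allI impI)
    fix x i assume x: "x \<in> bx s R" and i: "i < s"
    have xr: "\<bar>x j\<bar> \<le> R" if "j < s" for j using x that unfolding bx_def by blast
    have \<iota>e: "\<bar>\<iota> (x j) - x j\<bar> \<le> \<eta>" if "j < s" for j unfolding \<iota>_def using hI[OF xr[OF that]] .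
    have t: "0 \<le> SA * (\<epsilon> * 2)" using SA0 e0 by simp
    have \<eta>\<epsilon>: "\<eta> < \<epsilon>" unfolding \<eta>_def using e0 SA0 by (simp add: field_simps) (use t in linarith)
    show "\<bar>\<Phi> x i - (x(p := opF \<sigma> s A q c B e x)) i\<bar> < \<epsilon>"
    proof (cases "i = p")
      case True
      have "\<Phi> x i - (x(p := opF \<sigma> s A q c B e x)) i = (\<Sum>j<s. A j * (\<iota> (x j) - x j))"
        using True val[OF i] by (simp add: opF_def right_diff_distrib sum_subtractf)
      then have "\<bar>\<Phi> x i - (x(p := opF \<sigma> s A q c B e x)) i\<bar> \<le> (\<Sum>j<s. \<bar>A j\<bar> * \<eta>)"
        by (auto simp: abs_mult intro!: order_trans[OF sum_abs] sum_mono mult_left_mono \<iota>e)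
      also have "\<dots> = SA * \<eta>" unfolding SA_def by (simp add: sum_distrib_right)
      also have "\<dots> < \<epsilon>"
      proof -
        have t2: "0 \<le> SA * \<epsilon>" using SA0 e0 by simp
        show ?thesis unfolding \<eta>_def using e0 SA0 by (simp add: field_simps) (use t2 in linarith)
      qed
      finally show ?thesis .
    next
      case False
      then show ?thesis using val[OF i] \<iota>e[OF i] \<eta>\<epsilon> by simp
    qed
  qed
qed

definition lin :: "nat \<Rightarrow> (nat \<Rightarrow> real) \<Rightarrow> (nat \<Rightarrow> real) \<Rightarrow> real" where
  "lin n a x = (\<Sum>j<n. a j * x j)"

definition ind :: "nat \<Rightarrow> nat \<Rightarrow> real" where
  "ind p i = (if i = p then 1 else 0)"

definition ext :: "nat \<Rightarrow> (nat \<Rightarrow> real) \<Rightarrow> nat \<Rightarrow> real" where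
  "ext n a i = (if i < n then a i else 0)"

lemma sum_ind: "p < s \<Longrightarrow> (\<Sum>i<s. ind p i * x i) = x p"
  unfolding ind_def by (rule sum_delta_mult[of p s 1 x, simplified])

lemma sum_ext: "n \<le> s \<Longrightarrow> (\<Sum>i<s. ext n a i * x i) = lin n a x"
proof -
  assume ns: "n \<le> s"
  have "(\<Sum>i<s. ext n a i * x i) = (\<Sum>i<s. if i < n then a i * x i else 0)"
    by (rule sum.cong) (auto simp: ext_def)
  also have "\<dots> = (\<Sum>i\<in>{..<s} \<inter> {i. i < n}. a i * x i)"
    by (simp add: sum.If_cases)
  also have "{..<s} \<inter> {i. i < n} = {..<n}" using ns by auto
  finally show ?thesis unfolding lin_def by simp
qed

lemma lin_upd: "n \<le> p \<Longrightarrow> lin n a (x(p := v)) = lin n a x"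
  unfolding lin_def by (intro sum.cong) auto

lemma ucb_linf: "ucb s (lin n a)"
  unfolding lin_def[abs_def] by (intro ucb_sum ucb_mult ucb_const ucb_coord)

definition APg :: "(real \<Rightarrow> real) \<Rightarrow> nat \<Rightarrow> ((nat \<Rightarrow> real) \<Rightarrow> (nat \<Rightarrow> real)) \<Rightarrow> bool" where
  "APg \<sigma> s G \<longleftrightarrow> AP \<sigma> s G \<and> good s G"

lemma APg_comp: "APg \<sigma> s G1 \<Longrightarrow> APg \<sigma> s G2 \<Longrightarrow> APg \<sigma> s (\<lambda>x. G2 (G1 x))"
  unfolding APg_def using AP_comp good_comp by blast

lemma APg_cong: "APg \<sigma> s G \<Longrightarrow> (\<And>x. G x = G' x) \<Longrightarrow> APg \<sigma> s G'"
proof -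
  assume "APg \<sigma> s G" "\<And>x. G x = G' x"
  moreover then have "G = G'" by auto
  ultimately show ?thesis by simp
qed

fun accp :: "(real \<Rightarrow> real) \<Rightarrow> nat \<Rightarrow> (nat \<Rightarrow> real) \<Rightarrow> nat \<Rightarrow> nat \<Rightarrow> (real \<times> real \<times> real \<times> real) list
   \<Rightarrow> (nat \<Rightarrow> real) \<Rightarrow> (nat \<Rightarrow> real)" where
  "accp \<sigma> n a yp zp [] x = x"
| "accp \<sigma> n a yp zp ((c, \<alpha>, \<beta>, \<gamma>) # L) x = accp \<sigma> n a yp zp L
     (x(zp := x zp + c * \<sigma> (\<alpha> * x yp + \<beta> * lin n a x + \<gamma>)))"

definition bsum :: "(real \<Rightarrow> real) \<Rightarrow> (real \<times> real \<times> real \<times> real) list \<Rightarrow> real \<Rightarrow> real \<Rightarrow> real" where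
  "bsum \<sigma> L y t = sum_list (map (\<lambda>(c, \<alpha>, \<beta>, \<gamma>). c * \<sigma> (\<alpha> * y + \<beta> * t + \<gamma>)) L)"

lemma bsum_Cons: "bsum \<sigma> ((c,\<alpha>,\<beta>,\<gamma>) # L) y t = c * \<sigma> (\<alpha> * y + \<beta> * t + \<gamma>) + bsum \<sigma> L y t"
  by (simp add: bsum_def)

lemma bsum_append: "bsum \<sigma> (L1 @ L2) y t = bsum \<sigma> L1 y t + bsum \<sigma> L2 y t"
  by (simp add: bsum_def)

lemma bsum_plus: "bsum \<sigma> (map (\<lambda>(d,e,f). (c0*d, e, e, f)) L) y t = c0 * sgen \<sigma> L (t + y)"
  by (induct L) (auto simp: bsum_def sgen_def algebra_simps)

lemma bsum_minus: "bsum \<sigma> (map (\<lambda>(d,e,f). (c0*d, -e, e, f)) L) y t = c0 * sgen \<sigma> L (t - y)"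
  by (induct L) (auto simp: bsum_def sgen_def algebra_simps)

lemma bilinear_approx:
  assumes sq: "inS \<sigma> (\<lambda>u. u^2)" and e: "0 < \<epsilon>"
  shows "\<exists>L. \<forall>y t. \<bar>y\<bar> \<le> R \<and> \<bar>t\<bar> \<le> R \<longrightarrow> \<bar>bsum \<sigma> L y t - t * y\<bar> < \<epsilon>"
proof -
  have "0 < 2*\<epsilon>" using e by simp
  then obtain L1 where L1: "\<And>u. \<bar>u\<bar> \<le> 2*R \<Longrightarrow> \<bar>u^2 - sgen \<sigma> L1 u\<bar> < 2*\<epsilon>"
    using sq unfolding inS_def by blast
  define L where "L = map (\<lambda>(d,e,f). ((1/4)*d, e, e, f)) L1 @ map (\<lambda>(d,e,f). ((-1/4)*d, -e, e, f)) L1"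
  show ?thesis
  proof (intro exI[of _ L] allI impI)
    fix y t :: real assume yt: "\<bar>y\<bar> \<le> R \<and> \<bar>t\<bar> \<le> R"
    have a: "\<bar>(t+y)^2 - sgen \<sigma> L1 (t+y)\<bar> < 2*\<epsilon>" using yt by (intro L1) linarith
    have b: "\<bar>(t-y)^2 - sgen \<sigma> L1 (t-y)\<bar> < 2*\<epsilon>" using yt by (intro L1) linarith
    have "bsum \<sigma> L y t = (1/4) * sgen \<sigma> L1 (t+y) - (1/4) * sgen \<sigma> L1 (t-y)"
      unfolding L_def bsum_append bsum_plus bsum_minus by simp
    moreover have "t * y = (1/4) * (t+y)^2 - (1/4) * (t-y)^2" by (simp add: power2_eq_square algebra_simps)
    ultimately show "\<bar>bsum \<sigma> L y t - t * y\<bar> < \<epsilon>" using a b by (simp add: abs_less_iff)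
  qed
qed

lemma exp_limit_unif:
  assumes e: "0 < \<epsilon>"
  shows "\<exists>N::nat. 0 < N \<and> (\<forall>t. \<bar>t\<bar> \<le> T \<longrightarrow> \<bar>(1 + t / N)^N - exp t\<bar> < \<epsilon>)"
proof -
  define T1 where "T1 = \<bar>T\<bar> + 1"
  have T1: "1 \<le> T1" unfolding T1_def by simp
  define K where "K = 2 * T1^2 * exp (T1 + 1)"
  have K0: "0 < K" unfolding K_def using T1 by simp
  obtain N :: nat where N: "2 * T1^2 + K / \<epsilon> + 1 < N" using reals_Archimedean2 by blast
  have N0: "0 < real N" using N K0 e T1 by (smt (verit) divide_pos_pos zero_less_power)
  show ?thesis
  proof (intro exI[of _ N] conjI allI impI)
    show "0 < N" using N0 by simp
    fix t :: real assume t: "\<bar>t\<bar> \<le> T"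
    then have tT: "\<bar>t\<bar> \<le> T1" unfolding T1_def by simp
    define u where "u = t / N"
    have "2 * T1 \<le> 2 * T1^2" using T1 by (simp add: power2_eq_square)
    then have NT: "2 * T1 < N" using N K0 e by (smt (verit) divide_pos_pos)
    have u2: "\<bar>u\<bar> \<le> 1/2" unfolding u_def using tT NT N0 by (simp add: abs_divide field_simps)
    have u1: "0 < 1 + u" using u2 by (simp add: abs_le_iff)
    have pe: "(1 + u)^N = exp (N * ln (1 + u))"
      using u1 by (simp add: exp_of_nat_mult ln_realpow[symmetric])
    have lnb: "\<bar>ln (1 + u) - u\<bar> \<le> 2 * u^2" by (rule abs_ln_one_plus_x_minus_x_bound[OF u2])
    define d where "d = N * ln (1 + u) - t"
    have dd: "d = N * (ln (1 + u) - u)" unfolding d_def u_def using N0 by (simp add: field_simps)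
    have "\<bar>d\<bar> \<le> N * (2 * u^2)" unfolding dd using lnb N0 by (simp add: abs_mult mult_left_mono)
    also have "N * (2 * u^2) = 2 * t^2 / N" unfolding u_def using N0 by (simp add: power2_eq_square field_simps)
    also have "\<dots> \<le> 2 * T1^2 / N"
      using tT N0 by (intro divide_right_mono mult_left_mono) (auto simp: abs_le_square_iff[symmetric])
    finally have dB: "\<bar>d\<bar> \<le> 2 * T1^2 / N" .
    have d1: "\<bar>d\<bar> \<le> 1" using dB N N0 K0 e by (smt (verit) divide_le_eq_1_pos divide_pos_pos)
    have "\<exists>z. \<bar>z - t\<bar> \<le> \<bar>d\<bar> \<and> exp (t + d) - exp t = d * exp z"
      by (rule mvt_sym) (rule DERIV_exp)
    then obtain z where z: "\<bar>z - t\<bar> \<le> \<bar>d\<bar>" and ez: "exp (t + d) - exp t = d * exp z" by blast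
    have "z \<le> T1 + 1" using z d1 tT by linarith
    then have ezb: "exp z \<le> exp (T1 + 1)" by simp
    have "\<bar>(1 + t / N)^N - exp t\<bar> = \<bar>d\<bar> * exp z"
      using ez pe unfolding d_def u_def by (simp add: abs_mult)
    also have "\<dots> \<le> (2 * T1^2 / N) * exp (T1 + 1)" using dB ezb by (intro mult_mono) auto
    also have "\<dots> = K / N" unfolding K_def by simp
    also have "\<dots> < \<epsilon>"
    proof -
      have "K / \<epsilon> < N" using N T1 by (smt (verit) zero_le_power2)
      then show ?thesis using e N0 by (simp add: field_simps)
    qed
    finally show "\<bar>(1 + t / N)^N - exp t\<bar> < \<epsilon>" .
  qed
qed

definition expsum :: "nat \<Rightarrow> (real \<times> (nat \<Rightarrow> real)) list \<Rightarrow> (nat \<Rightarrow> real) \<Rightarrow> real" where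
  "expsum n L x = sum_list (map (\<lambda>(c, a). c * exp (lin n a x)) L)"

lemma lin_eq: "(\<And>j. j < n \<Longrightarrow> y j = x j) \<Longrightarrow> lin n a y = lin n a x"
  unfolding lin_def by (intro sum.cong) auto

lemma expsum_eq: "(\<And>j. j < n \<Longrightarrow> y j = x j) \<Longrightarrow> expsum n L y = expsum n L x"
  unfolding expsum_def using lin_eq[of n y x] by (induct L) auto

locale regs =
  fixes \<sigma> :: "real \<Rightarrow> real" and t0 D :: real and n s yp zp :: nat
  assumes \<sigma>c: "continuous_on UNIV \<sigma>" and AI: "AIdent \<sigma> t0 D" and sq: "inS \<sigma> (\<lambda>u. u^2)"
    and yn: "n \<le> yp" and zn: "n \<le> zp" and ys: "yp < s" and zs: "zp < s" and yz: "yp \<noteq> zp"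
begin

lemma ns: "n \<le> s" using yn ys by simp

lemma APg_op: "p < s \<Longrightarrow> APg \<sigma> s (\<lambda>x. x(p := opF \<sigma> s A q c B e x))"
  unfolding APg_def using AP_op[OF AI] good_op[OF \<sigma>c] by blast

lemma APg_Z: "APg \<sigma> s (\<lambda>x. x(zp := 0))"
  by (rule APg_cong[OF APg_op[OF zs, of "\<lambda>_. 0" 0 0 "\<lambda>_. 0" 0]]) (simp add: opF_def)

lemma APg_id: "APg \<sigma> s (\<lambda>x. x)"
  by (rule APg_cong[OF APg_op[OF zs, of "ind zp" 0 0 "\<lambda>_. 0" 0]]) (simp add: opF_def sum_ind[OF zs])

lemma sum_lin2: "(\<Sum>i<s. (\<alpha> * ind p i + \<beta> * ext n a i) * x i) = \<alpha> * x p + \<beta> * lin n a x" if "p < s"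
proof -
  have "(\<Sum>i<s. (\<alpha> * ind p i + \<beta> * ext n a i) * x i) = \<alpha> * (\<Sum>i<s. ind p i * x i) + \<beta> * (\<Sum>i<s. ext n a i * x i)"
    by (simp add: distrib_right sum.distrib sum_distrib_left mult.assoc)
  then show ?thesis using sum_ind[OF that] sum_ext[OF ns] by simp
qed

lemma sum_ind2: "(\<Sum>i<s. (ind p i + \<tau> * ind p' i) * x i) = x p + \<tau> * x p'" if "p < s" "p' < s"
proof -
  have "(\<Sum>i<s. (ind p i + \<tau> * ind p' i) * x i) = (\<Sum>i<s. ind p i * x i) + \<tau> * (\<Sum>i<s. ind p' i * x i)"
    by (simp add: distrib_right sum.distrib sum_distrib_left mult.assoc)
  then show ?thesis using sum_ind[OF that(1)] sum_ind[OF that(2)] by simp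
qed

lemma APg_accstep: "APg \<sigma> s (\<lambda>x. x(zp := x zp + c * \<sigma> (\<alpha> * x yp + \<beta> * lin n a x + \<gamma>)))"
proof (rule APg_cong[OF APg_op[OF zs, of "ind zp" 0 c "\<lambda>i. \<alpha> * ind yp i + \<beta> * ext n a i" \<gamma>]])
  fix x
  show "x(zp := opF \<sigma> s (ind zp) 0 c (\<lambda>i. \<alpha> * ind yp i + \<beta> * ext n a i) \<gamma> x) =
        x(zp := x zp + c * \<sigma> (\<alpha> * x yp + \<beta> * lin n a x + \<gamma>))"
    unfolding opF_def sum_ind[OF zs] sum_lin2[OF ys] by simp
qed

lemma APg_acc: "APg \<sigma> s (accp \<sigma> n a yp zp L)"
proof (induct L)
  case Nil
  show ?case by (rule APg_cong[OF APg_id]) simp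
next
  case (Cons l L)
  obtain c \<alpha> \<beta> \<gamma> where l: "l = (c, \<alpha>, \<beta>, \<gamma>)" by (cases l) auto
  show ?case
  proof (rule APg_cong[OF APg_comp[OF APg_accstep[of c \<alpha> \<beta> a \<gamma>] Cons]])
    fix x show "accp \<sigma> n a yp zp L (x(zp := x zp + c * \<sigma> (\<alpha> * x yp + \<beta> * lin n a x + \<gamma>))) =
       accp \<sigma> n a yp zp (l # L) x" unfolding l by (simp only: accp.simps)
  qed
qed

lemma acc_val: "accp \<sigma> n a yp zp L x = x(zp := x zp + bsum \<sigma> L (x yp) (lin n a x))"
proof (induct L arbitrary: x)
  case Nil then show ?case by (simp add: bsum_def)
next
  case (Cons l L)
  obtain c \<alpha> \<beta> \<gamma> where l: "l = (c, \<alpha>, \<beta>, \<gamma>)" by (cases l) auto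
  define v where "v = x zp + c * \<sigma> (\<alpha> * x yp + \<beta> * lin n a x + \<gamma>)"
  have "accp \<sigma> n a yp zp (l # L) x = accp \<sigma> n a yp zp L (x(zp := v))"
    unfolding l v_def by (simp only: accp.simps)
  also have "\<dots> = (x(zp := v))(zp := (x(zp := v)) zp + bsum \<sigma> L ((x(zp := v)) yp) (lin n a (x(zp := v))))"
    by (rule Cons)
  also have "\<dots> = x(zp := v + bsum \<sigma> L (x yp) (lin n a x))"
    using yz by (simp only: lin_upd[OF zn] fun_upd_upd fun_upd_same fun_upd_other yz not_False_eq_True)
  also have "\<dots> = x(zp := x zp + bsum \<sigma> (l # L) (x yp) (lin n a x))"
    unfolding v_def l by (simp add: bsum_Cons algebra_simps)
  finally show ?case .
qed

definition step :: "real \<Rightarrow> (nat \<Rightarrow> real) \<Rightarrow> (nat \<Rightarrow> real) \<Rightarrow> (nat \<Rightarrow> real)" where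
  "step \<tau> a x = (x(yp := x yp + \<tau> * lin n a x * x yp))(zp := 0)"

lemma lin_bound:
  assumes x: "x \<in> bx s R"
  shows "\<bar>lin n a x\<bar> \<le> (\<Sum>j<n. \<bar>a j\<bar>) * \<bar>R\<bar>"
proof -
  have "\<bar>lin n a x\<bar> \<le> (\<Sum>j<n. \<bar>a j * x j\<bar>)" unfolding lin_def by (rule sum_abs)
  also have "\<dots> \<le> (\<Sum>j<n. \<bar>a j\<bar> * \<bar>R\<bar>)"
  proof (rule sum_mono)
    fix j assume "j \<in> {..<n}"
    then have "j < s" using ns by auto
    then have "\<bar>x j\<bar> \<le> R" using x unfolding bx_def by blast
    then show "\<bar>a j * x j\<bar> \<le> \<bar>a j\<bar> * \<bar>R\<bar>" by (simp add: abs_mult mult_left_mono)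
  qed
  also have "\<dots> = (\<Sum>j<n. \<bar>a j\<bar>) * \<bar>R\<bar>" by (simp add: sum_distrib_right)
  finally show ?thesis .
qed

lemma y_bound: "x \<in> bx s R \<Longrightarrow> \<bar>x yp\<bar> \<le> \<bar>R\<bar>"
  using ys unfolding bx_def by force

lemma good_step: "good s (step \<tau> a)"
proof -
  have "good s (\<lambda>x. ((\<lambda>x. x(yp := x yp + \<tau> * lin n a x * x yp)) x)(zp := (\<lambda>x. 0) x))"
    by (intro good_upd good_id ucb_add ucb_mult ucb_const ucb_coord ucb_linf ys zs)
  then show ?thesis unfolding step_def[abs_def] by simp
qed

lemma AP_step: "AP \<sigma> s (step \<tau> a)"
proof (rule AP_limit)
  fix R \<epsilon> :: real assume e: "0 < \<epsilon>"
  define R2 where "R2 = max \<bar>R\<bar> ((\<Sum>j<n. \<bar>a j\<bar>) * \<bar>R\<bar>)"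
  have "0 < \<epsilon> / (\<bar>\<tau>\<bar> + 1)" using e by simp
  then obtain L where L: "\<And>y t. \<bar>y\<bar> \<le> R2 \<and> \<bar>t\<bar> \<le> R2 \<Longrightarrow> \<bar>bsum \<sigma> L y t - t * y\<bar> < \<epsilon> / (\<bar>\<tau>\<bar> + 1)"
    using bilinear_approx[OF sq] by blast
  define G where "G = (\<lambda>x. (\<lambda>x. x(zp := 0)) ((\<lambda>x. x(yp := opF \<sigma> s (\<lambda>i. ind yp i + \<tau> * ind zp i) 0 0 (\<lambda>_. 0) 0 x))
            (accp \<sigma> n a yp zp L ((\<lambda>x. x(zp := 0)) x))))"
  have "APg \<sigma> s G" unfolding G_def
    by (rule APg_comp[OF APg_comp[OF APg_comp[OF APg_Z APg_acc] APg_op[OF ys]] APg_Z])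
  moreover have Gv: "G x = (x(yp := x yp + \<tau> * bsum \<sigma> L (x yp) (lin n a x)))(zp := 0)" for x
  proof -
    have "G x = (\<lambda>x. x(zp := 0)) ((\<lambda>x. x(yp := opF \<sigma> s (\<lambda>i. ind yp i + \<tau> * ind zp i) 0 0 (\<lambda>_. 0) 0 x))
              (accp \<sigma> n a yp zp L (x(zp := 0))))" unfolding G_def by simp
    also have "\<dots> = (\<lambda>x. x(zp := 0)) ((\<lambda>x. x(yp := x yp + \<tau> * x zp))
              (accp \<sigma> n a yp zp L (x(zp := 0))))" unfolding opF_def sum_ind2[OF ys zs] by simp
    also have "accp \<sigma> n a yp zp L (x(zp := 0)) = (x(zp := 0))(zp := 0 + bsum \<sigma> L (x yp) (lin n a x))"
      unfolding acc_val using yz by (simp only: lin_upd[OF zn] fun_upd_same fun_upd_other yz not_False_eq_True)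
    also have "(\<lambda>x. x(zp := 0)) ((\<lambda>x. x(yp := x yp + \<tau> * x zp)) ((x(zp := 0))(zp := 0 + bsum \<sigma> L (x yp) (lin n a x))))
       = (x(yp := x yp + \<tau> * bsum \<sigma> L (x yp) (lin n a x)))(zp := 0)"
      using yz by (intro ext) simp
    finally show ?thesis .
  qed
  moreover have "\<forall>x\<in>bx s R. \<forall>i<s. \<bar>step \<tau> a x i - G x i\<bar> < \<epsilon>"
  proof (intro ballI allI impI)
    fix x i assume x: "x \<in> bx s R" and i: "i < s"
    show "\<bar>step \<tau> a x i - G x i\<bar> < \<epsilon>"
    proof (cases "i = yp")
      case True
      have "\<bar>x yp\<bar> \<le> R2" "\<bar>lin n a x\<bar> \<le> R2"
        using y_bound[OF x] lin_bound[OF x, of a] unfolding R2_def by (auto simp: le_max_iff_disj)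
      then have b: "\<bar>bsum \<sigma> L (x yp) (lin n a x) - lin n a x * x yp\<bar> < \<epsilon> / (\<bar>\<tau>\<bar> + 1)"
        using L by blast
      have "step \<tau> a x i - G x i = \<tau> * (lin n a x * x yp - bsum \<sigma> L (x yp) (lin n a x))"
        unfolding Gv step_def using True yz by (simp add: algebra_simps)
      then have "\<bar>step \<tau> a x i - G x i\<bar> = \<bar>\<tau>\<bar> * \<bar>bsum \<sigma> L (x yp) (lin n a x) - lin n a x * x yp\<bar>"
        by (simp add: abs_mult abs_minus_commute)
      also have "\<dots> \<le> \<bar>\<tau>\<bar> * (\<epsilon> / (\<bar>\<tau>\<bar> + 1))" using b by (intro mult_left_mono) auto
      also have "\<dots> < \<epsilon>" using e by (simp add: field_simps)
      finally show ?thesis .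
    next
      case False then show ?thesis unfolding Gv step_def using e by simp
    qed
  qed
  ultimately show "\<exists>G'. AP \<sigma> s G' \<and> (\<forall>x\<in>bx s R. \<forall>i<s. \<bar>step \<tau> a x i - G' x i\<bar> < \<epsilon>)"
    unfolding APg_def by blast
qed

lemma APg_step: "APg \<sigma> s (step \<tau> a)"
  unfolding APg_def using AP_step good_step by blast

lemma step_pow: "(step \<tau> a ^^ Suc k) x = (x(yp := x yp * (1 + \<tau> * lin n a x)^(Suc k)))(zp := 0)"
proof (induct k)
  case 0 then show ?case by (intro ext) (simp add: step_def algebra_simps)
next
  case (Suc k)
  have "(step \<tau> a ^^ Suc (Suc k)) x = step \<tau> a ((step \<tau> a ^^ Suc k) x)" by simp
  also have "\<dots> = (x(yp := x yp * (1 + \<tau> * lin n a x)^(Suc (Suc k))))(zp := 0)"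
    unfolding Suc step_def using yz by (simp add: lin_upd[OF zn] lin_upd[OF yn] algebra_simps)
  finally show ?case .
qed

lemma APg_step_pow: "APg \<sigma> s (step \<tau> a ^^ Suc k)"
proof (induct k)
  case 0 show ?case using APg_step by simp
next
  case (Suc k)
  have "APg \<sigma> s (\<lambda>x. step \<tau> a ((step \<tau> a ^^ Suc k) x))" by (rule APg_comp[OF Suc APg_step])
  moreover have "(step \<tau> a ^^ Suc (Suc k)) = (\<lambda>x. step \<tau> a ((step \<tau> a ^^ Suc k) x))"
    by (rule ext) simp
  ultimately show ?case by simp
qed

definition mul :: "(nat \<Rightarrow> real) \<Rightarrow> (nat \<Rightarrow> real) \<Rightarrow> (nat \<Rightarrow> real)" where
  "mul a x = (x(yp := x yp * exp (lin n a x)))(zp := 0)"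

lemma APg_mul: "APg \<sigma> s (mul a)"
proof -
  have "good s (\<lambda>x. ((\<lambda>x. x(yp := x yp * exp (lin n a x))) x)(zp := (\<lambda>x. 0) x))"
    by (intro good_upd good_id ucb_mult ucb_const ucb_coord ucb_linf ucb_compose[OF continuous_on_exp] continuous_on_id ys zs)
  then have g: "good s (mul a)" unfolding mul_def[abs_def] by simp
  have "AP \<sigma> s (mul a)"
  proof (rule AP_limit)
    fix R \<epsilon> :: real assume e: "0 < \<epsilon>"
    have "0 < \<epsilon> / (\<bar>R\<bar> + 1)" using e by simp
    then obtain N :: nat where N0: "0 < N" and N: "\<And>t. \<bar>t\<bar> \<le> (\<Sum>j<n. \<bar>a j\<bar>) * \<bar>R\<bar> \<Longrightarrow>
        \<bar>(1 + t / N)^N - exp t\<bar> < \<epsilon> / (\<bar>R\<bar> + 1)"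
      using exp_limit_unif by blast
    obtain k where k: "N = Suc k" using N0 by (cases N) auto
    have "AP \<sigma> s (step (1 / N) a ^^ Suc k)" using APg_step_pow unfolding APg_def by blast
    moreover have "\<forall>x\<in>bx s R. \<forall>i<s. \<bar>mul a x i - (step (1 / N) a ^^ Suc k) x i\<bar> < \<epsilon>"
    proof (intro ballI allI impI)
      fix x i assume x: "x \<in> bx s R" and i: "i < s"
      show "\<bar>mul a x i - (step (1 / N) a ^^ Suc k) x i\<bar> < \<epsilon>"
      proof (cases "i = yp")
        case True
        have "mul a x i - (step (1 / N) a ^^ Suc k) x i = x yp * (exp (lin n a x) - (1 + lin n a x / N)^N)"
          unfolding step_pow mul_def using True yz k by (simp add: algebra_simps)
        then have "\<bar>mul a x i - (step (1 / N) a ^^ Suc k) x i\<bar> = \<bar>x yp\<bar> * \<bar>(1 + lin n a x / N)^N - exp (lin n a x)\<bar>"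
          by (simp add: abs_mult abs_minus_commute)
        also have "\<dots> \<le> \<bar>R\<bar> * (\<epsilon> / (\<bar>R\<bar> + 1))"
          using y_bound[OF x] N[OF lin_bound[OF x, of a]] by (intro mult_mono) auto
        also have "\<dots> < \<epsilon>" using e by (simp add: field_simps)
        finally show ?thesis .
      next
        case False then show ?thesis unfolding step_pow mul_def using e by simp
      qed
    qed
    ultimately show "\<exists>G'. AP \<sigma> s G' \<and> (\<forall>x\<in>bx s R. \<forall>i<s. \<bar>mul a x i - G' x i\<bar> < \<epsilon>)" by blast
  qed
  with g show ?thesis unfolding APg_def by blast
qed

lemma APg_addc: "APg \<sigma> s (\<lambda>x. (x(yp := x yp + c))(zp := 0))"
proof -
  have "APg \<sigma> s (\<lambda>x. (\<lambda>x. x(zp := 0)) ((\<lambda>x. x(yp := opF \<sigma> s (ind yp) c 0 (\<lambda>_. 0) 0 x)) x))"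
    by (rule APg_comp[OF APg_op[OF ys] APg_Z])
  then show ?thesis by (simp add: opF_def sum_ind[OF ys])
qed

lemma APg_addexp: "APg \<sigma> s (\<lambda>x. (x(yp := x yp + c * exp (lin n a x)))(zp := 0))"
proof -
  have "APg \<sigma> s (\<lambda>x. mul a ((\<lambda>x. (x(yp := x yp + c))(zp := 0)) (mul (\<lambda>j. - a j) x)))"
    by (rule APg_comp[OF APg_comp[OF APg_mul APg_addc] APg_mul])
  moreover have "mul a ((\<lambda>x. (x(yp := x yp + c))(zp := 0)) (mul (\<lambda>j. - a j) x)) =
        (x(yp := x yp + c * exp (lin n a x)))(zp := 0)" for x
  proof -
    have l: "lin n (\<lambda>j. - a j) x = - lin n a x" unfolding lin_def by (simp add: sum_negf)
    have "exp (- lin n a x) * exp (lin n a x) = 1" by (simp add: exp_minus field_simps)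
    then show ?thesis unfolding mul_def using yz
      by (simp add: lin_upd[OF zn] lin_upd[OF yn] l algebra_simps)
  qed
  ultimately show ?thesis by (rule APg_cong)
qed

lemma APg_addexpl: "APg \<sigma> s (\<lambda>x. (x(yp := x yp + expsum n L x))(zp := 0))"
proof (induct L)
  case Nil show ?case by (rule APg_cong[OF APg_Z]) (simp add: expsum_def fun_upd_def)
next
  case (Cons l L)
  obtain c a where l: "l = (c, a)" by (cases l) auto
  have "APg \<sigma> s (\<lambda>x. (\<lambda>x. (x(yp := x yp + expsum n L x))(zp := 0)) ((\<lambda>x. (x(yp := x yp + c * exp (lin n a x)))(zp := 0)) x))"
    by (rule APg_comp[OF APg_addexp Cons])
  moreover have "(\<lambda>x. (x(yp := x yp + expsum n L x))(zp := 0)) ((\<lambda>x. (x(yp := x yp + c * exp (lin n a x)))(zp := 0)) x)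
     = (x(yp := x yp + expsum n (l # L) x))(zp := 0)" for x
  proof -
    have "expsum n L ((x(yp := x yp + c * exp (lin n a x)))(zp := 0)) = expsum n L x"
      by (rule expsum_eq) (use yn zn in auto)
    then show ?thesis using yz by (simp add: l expsum_def algebra_simps)
  qed
  ultimately show ?case by (rule APg_cong)
qed

end

definition tot :: "nat \<Rightarrow> nat \<Rightarrow> (nat \<Rightarrow> (real \<times> (nat \<Rightarrow> real)) list) \<Rightarrow> nat \<Rightarrow> (nat \<Rightarrow> real) \<Rightarrow> (nat \<Rightarrow> real)" where
  "tot n m Ls j x = (\<lambda>i. if n \<le> i \<and> i < n + j then x i + expsum n (Ls (i - n)) x
                        else if i = n + m then 0 else x i)"

lemma APg_tot:
  assumes \<sigma>c: "continuous_on UNIV \<sigma>" and AI: "AIdent \<sigma> t0 D" and sq: "inS \<sigma> (\<lambda>u. u^2)"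
    and m: "1 \<le> m"
  shows "j \<le> m \<Longrightarrow> APg \<sigma> (n + m + 1) (tot n m Ls j)"
proof (induct j)
  case 0
  interpret R: regs \<sigma> t0 D n "n + m + 1" n "n + m"
    by unfold_locales (use \<sigma>c AI sq m in auto)
  show ?case by (rule APg_cong[OF R.APg_Z]) (auto simp: tot_def)
next
  case (Suc j)
  then have j: "j < m" by simp
  interpret R: regs \<sigma> t0 D n "n + m + 1" "n + j" "n + m"
    by unfold_locales (use \<sigma>c AI sq j in auto)
  have "APg \<sigma> (n + m + 1) (\<lambda>x. (\<lambda>x. (x(n + j := x (n + j) + expsum n (Ls j) x))(n + m := 0)) (tot n m Ls j x))"
    by (rule APg_comp[OF Suc(1) R.APg_addexpl]) (use Suc(2) in simp)
  moreover have "(\<lambda>x. (x(n + j := x (n + j) + expsum n (Ls j) x))(n + m := 0)) (tot n m Ls j x) = tot n m Ls (Suc j) x" for x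
  proof -
    have e: "expsum n (Ls j) (tot n m Ls j x) = expsum n (Ls j) x"
      by (rule expsum_eq) (simp add: tot_def)
    show ?thesis unfolding e using j by (intro ext) (auto simp: tot_def)
  qed
  ultimately show ?case by (rule APg_cong)
qed

lemma final_net:
  assumes \<sigma>c: "continuous_on UNIV \<sigma>" and AI: "AIdent \<sigma> t0 D" and sq: "inS \<sigma> (\<lambda>u. u^2)"
    and m: "1 \<le> m" and e: "0 < \<epsilon>" and R: "0 \<le> R"
  shows "\<exists>H. is_deep_net \<sigma> n (n + m + 2) m H \<and>
     (\<forall>v. (\<forall>j. n \<le> j \<longrightarrow> v j = 0) \<and> (\<forall>j<n. \<bar>v j\<bar> \<le> R) \<longrightarrow> (\<forall>k<m. \<bar>H v k - expsum n (Ls k) v\<bar> < \<epsilon>))"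
proof -
  define s where "s = n + m + 1"
  have "APg \<sigma> s (tot n m Ls m)" unfolding s_def by (rule APg_tot[OF \<sigma>c AI sq m]) simp
  then have "AP \<sigma> s (tot n m Ls m)" unfolding APg_def by blast
  from APD[OF this e, of R] obtain N where N: "is_deep_net \<sigma> s (Suc s) s N"
    and P: "\<forall>x\<in>bx s R. \<forall>i<s. \<bar>N x i - tot n m Ls m x i\<bar> < \<epsilon>" by blast
  define E :: "nat \<Rightarrow> nat \<Rightarrow> real" where "E = (\<lambda>j i. if j = i then 1 else 0)"
  define Pm :: "nat \<Rightarrow> nat \<Rightarrow> real" where "Pm = (\<lambda>k i. if i = n + k then 1 else 0)"
  define H where "H = (\<lambda>v. affine_map s m Pm (\<lambda>_. 0) (N (affine_map n s E (\<lambda>_. 0) v)))"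
  have HN: "is_deep_net \<sigma> n (n + m + 2) m H"
  proof -
    have "is_deep_net \<sigma> n (Suc s) m H" unfolding H_def by (intro net_post net_pre N)
    moreover have "Suc s = n + m + 2" unfolding s_def by simp
    ultimately show ?thesis by simp
  qed
  show ?thesis
  proof (intro exI[of _ H] conjI HN allI impI)
    fix v k assume v: "(\<forall>j. n \<le> j \<longrightarrow> v j = 0) \<and> (\<forall>j<n. \<bar>v j\<bar> \<le> R)" and k: "k < m"
    define ev where "ev = affine_map n s E (\<lambda>_. 0) v"
    have evj: "ev j = (if j < n then v j else 0)" for j
    proof (cases "j < s")
      case True
      have "(\<Sum>i<n. E j i * v i) = (\<Sum>i<n. if j = i then v i else 0)"
        unfolding E_def by (rule sum.cong) auto
      also have "\<dots> = (if j < n then v j else 0)" by (simp add: sum.delta')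
      finally have "(\<Sum>i<n. E j i * v i) = (if j < n then v j else 0)" .
      then show ?thesis using True unfolding ev_def affine_map_def by simp
    next
      case False then show ?thesis unfolding ev_def affine_map_def s_def by simp
    qed
    have evb: "ev \<in> bx s R" unfolding bx_def
    proof (intro CollectI conjI allI impI)
      fix j assume "s \<le> j" then show "ev j = 0" unfolding evj s_def by simp
    next
      fix j assume "j < s" then show "\<bar>ev j\<bar> \<le> R" unfolding evj using v R by auto
    qed
    have nk: "n + k < s" unfolding s_def using k by simp
    have Hv: "H v k = N ev (n + k)"
    proof -
      have "H v k = (\<Sum>i<s. Pm k i * N ev i)" unfolding H_def ev_def[symmetric] using k by (simp add: affine_map_def)
      also have "\<dots> = (\<Sum>i<s. if i = n + k then N ev i else 0)" unfolding Pm_def by (rule sum.cong) auto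
      also have "\<dots> = N ev (n + k)" using nk by (simp add: sum.delta)
      finally show ?thesis .
    qed
    have tv: "tot n m Ls m ev (n + k) = expsum n (Ls k) v"
    proof -
      have "expsum n (Ls k) ev = expsum n (Ls k) v" by (rule expsum_eq) (simp add: evj)
      then show ?thesis unfolding tot_def using k by (simp add: evj)
    qed
    show "\<bar>H v k - expsum n (Ls k) v\<bar> < \<epsilon>" unfolding Hv tv[symmetric] using P evb nk by blast
  qed
qed

definition prodlist :: "(real \<times> (nat \<Rightarrow> real)) list \<Rightarrow> (real \<times> (nat \<Rightarrow> real)) list \<Rightarrow> (real \<times> (nat \<Rightarrow> real)) list" where
  "prodlist L1 L2 = concat (map (\<lambda>(c1, a1). map (\<lambda>(c2, a2). (c1 * c2, \<lambda>j. a1 j + a2 j)) L2) L1)"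

lemma expsum_append: "expsum n (L1 @ L2) x = expsum n L1 x + expsum n L2 x"
  by (simp add: expsum_def)

lemma expsum_Cons: "expsum n ((c, a) # L) x = c * exp (lin n a x) + expsum n L x"
  by (simp add: expsum_def)

lemma lin_add: "lin n (\<lambda>j. a1 j + a2 j) x = lin n a1 x + lin n a2 x"
  unfolding lin_def by (simp add: distrib_right sum.distrib)

lemma expsum_map: "expsum n (map (\<lambda>(c2, a2). (c1 * c2, \<lambda>j. a1 j + a2 j)) L2) x = c1 * exp (lin n a1 x) * expsum n L2 x"
  by (induct L2) (auto simp: expsum_def lin_add exp_add algebra_simps)

lemma expsum_prodlist: "expsum n (prodlist L1 L2) x = expsum n L1 x * expsum n L2 x"
proof (induct L1)
  case Nil then show ?case by (simp add: prodlist_def expsum_def)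
next
  case (Cons l L1)
  obtain c1 a1 where l: "l = (c1, a1)" by (cases l) auto
  have "prodlist (l # L1) L2 = map (\<lambda>(c2, a2). (c1 * c2, \<lambda>j. a1 j + a2 j)) L2 @ prodlist L1 L2"
    by (simp add: prodlist_def l)
  then have "expsum n (prodlist (l # L1) L2) x = c1 * exp (lin n a1 x) * expsum n L2 x + expsum n L1 x * expsum n L2 x"
    by (simp only: expsum_append expsum_map Cons)
  then show ?case by (simp add: l expsum_Cons algebra_simps)
qed

lemma expsum_cont: "continuous_on UNIV (expsum n L)"
proof (induct L)
  case Nil then show ?case by (simp add: expsum_def[abs_def])
next
  case (Cons l L)
  obtain c a where l: "l = (c, a)" by (cases l) auto
  have lc: "continuous_on UNIV (lin n a)"
    unfolding lin_def[abs_def] by (intro continuous_intros continuous_on_product_coordinates)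
  have eq: "expsum n (l # L) = (\<lambda>x. c * exp (lin n a x) + expsum n L x)"
    by (rule ext) (simp add: l expsum_def)
  show ?case unfolding eq
    by (intro continuous_intros Cons continuous_on_compose2[OF continuous_on_exp lc]) auto
qed

lemma sw_exp:
  fixes S :: "(nat \<Rightarrow> real) set"
  assumes S: "compact S" "S \<subseteq> Rn n" and f: "continuous_on S f" and e: "0 < \<epsilon>"
  shows "\<exists>L. \<forall>x\<in>S. \<bar>f x - expsum n L x\<bar> < \<epsilon>"
proof -
  define P where "P g \<longleftrightarrow> (\<exists>L. g = expsum n L)" for g :: "(nat \<Rightarrow> real) \<Rightarrow> real"
  have "\<exists>g. P g \<and> (\<forall>x\<in>S. \<bar>f x - g x\<bar> < \<epsilon>)"
  proof (rule Stone_Weierstrass_HOL[OF S(1) _ _ _ _ _ f e])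
    fix c :: real
    have "(\<lambda>x. c) = expsum n [(c, \<lambda>_. 0)]" by (rule ext) (simp add: expsum_def lin_def)
    then show "P (\<lambda>x. c)" unfolding P_def by blast
  next
    fix g assume "P g"
    then show "continuous_on S g" unfolding P_def using expsum_cont continuous_on_subset by blast
  next
    fix g h assume "P g \<and> P h"
    then obtain L1 L2 where "g = expsum n L1" "h = expsum n L2" unfolding P_def by blast
    then have "(\<lambda>x. g x + h x) = expsum n (L1 @ L2)" by (auto intro!: ext simp: expsum_append)
    then show "P (\<lambda>x. g x + h x)" unfolding P_def by blast
  next
    fix g h assume "P g \<and> P h"
    then obtain L1 L2 where "g = expsum n L1" "h = expsum n L2" unfolding P_def by blast
    then have "(\<lambda>x. g x * h x) = expsum n (prodlist L1 L2)" by (auto intro!: ext simp: expsum_prodlist)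
    then show "P (\<lambda>x. g x * h x)" unfolding P_def by blast
  next
    fix x y assume xy: "x \<in> S \<and> y \<in> S \<and> x \<noteq> y"
    obtain j where j: "x j \<noteq> y j" using xy by (meson ext)
    have jn: "j < n"
    proof (rule ccontr)
      assume "\<not> j < n"
      then have "x j = 0" "y j = 0" using xy S(2) unfolding Rn_def by auto
      with j show False by simp
    qed
    have lv: "lin n (ind j) z = z j" for z unfolding lin_def using jn by (rule sum_ind)
    have "expsum n [(1, ind j)] x \<noteq> expsum n [(1, ind j)] y" using j by (simp add: expsum_def lv)
    then show "\<exists>g. P g \<and> g x \<noteq> g y" unfolding P_def by blast
  qed
  then show ?thesis unfolding P_def by blast
qed

lemma vnorm_le_sum: "vnorm m v \<le> (\<Sum>k<m. \<bar>v k\<bar>)"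
  unfolding vnorm_def using L2_set_le_sum_abs[of v "{..<m}"] by (simp add: L2_set_def)

lemma vnorm_triangle: "vnorm m (\<lambda>i. a i + b i) \<le> vnorm m a + vnorm m b"
  unfolding vnorm_def using L2_set_triangle_ineq[of a b "{..<m}"] by (simp add: L2_set_def)

theorem theorem3p2:
  fixes A :: "('a::topological_space \<Rightarrow> real) set"
    and n m :: nat
    and \<sigma> :: "real \<Rightarrow> real"
    and K :: "'a set"
    and f :: "nat \<Rightarrow> 'a \<Rightarrow> real"
  assumes A_cont: "\<forall>h\<in>A. continuous_on UNIV h"
    and A_prop: "fd_comp_property A n"
    and \<sigma>_cont: "continuous_on UNIV \<sigma>"
    and \<sigma>_nonaffine: "\<not> (\<exists>a c. \<forall>t. \<sigma> t = a * t + c)"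
    and \<sigma>_deriv: "\<exists>t0 U. open U \<and> t0 \<in> U \<and> (\<forall>t\<in>U. \<sigma> differentiable (at t))
                     \<and> isCont (deriv \<sigma>) t0 \<and> deriv \<sigma> t0 \<noteq> 0"
    and m_pos: "m \<ge> 1"
    and K_compact: "compact K"
    and f_in: "\<forall>i<n. f i \<in> A"
    and f_dense: "dense_comp n m K (tuple n f)"
  shows "\<forall>g. continuous_on K g \<and> g ` K \<subseteq> Rn m \<longrightarrow>
           (\<forall>\<epsilon>>0. \<exists>H\<in>NN \<sigma> (n + m + 2) m n (tuple n f).
                      (\<forall>x\<in>K. vnorm m (g x - H x) < \<epsilon>))"
proof (intro allI impI)
  fix g :: "'a \<Rightarrow> nat \<Rightarrow> real" and \<epsilon> :: real
  assume g: "continuous_on K g \<and> g ` K \<subseteq> Rn m" and e: "0 < \<epsilon>"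
  obtain t0 U where U: "open U" "t0 \<in> U" "\<forall>t\<in>U. \<sigma> differentiable (at t)"
    "isCont (deriv \<sigma>) t0" "deriv \<sigma> t0 \<noteq> 0" using \<sigma>_deriv by blast
  have AI: "AIdent \<sigma> t0 (deriv \<sigma> t0)" by (rule AIdent_deriv[OF U])
  have sq: "inS \<sigma> (\<lambda>u. u^2)" by (rule inS_square[OF \<sigma>_cont \<sigma>_nonaffine])
  define F where "F = tuple n f"
  define C where "C = F ` K"
  have fc: "continuous_on K (f i)" if "i < n" for i
  proof -
    have "f i \<in> A" using f_in that by blast
    then have "continuous_on UNIV (f i)" using A_cont by blast
    then show ?thesis by (rule continuous_on_subset) simp
  qed
  have Fc: "continuous_on K F"
  proof (rule continuous_on_coordinatewise_then_product)
    fix i show "continuous_on K (\<lambda>x. F x i)"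
      unfolding F_def tuple_def by (cases "i < n") (auto intro: fc)
  qed
  have Cc: "compact C" unfolding C_def by (rule compact_continuous_image[OF Fc K_compact])
  have CR: "C \<subseteq> Rn n" unfolding C_def F_def tuple_def Rn_def by auto
  have "\<forall>i. \<exists>B. i < n \<longrightarrow> (\<forall>x\<in>K. \<bar>f i x\<bar> \<le> B)"
  proof (intro allI)
    fix i
    show "\<exists>B. i < n \<longrightarrow> (\<forall>x\<in>K. \<bar>f i x\<bar> \<le> B)"
    proof (cases "i < n")
      case i: True
      have "compact (f i ` K)" by (rule compact_continuous_image[OF fc[OF i] K_compact])
      then have "bounded (f i ` K)" by (rule compact_imp_bounded)
      then obtain B where "\<forall>y\<in>f i ` K. norm y \<le> B" unfolding bounded_iff by blast
      then have "\<forall>x\<in>K. \<bar>f i x\<bar> \<le> B" by auto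
      then show ?thesis by blast
    qed simp
  qed
  from choice[OF this] obtain B where B0: "\<forall>i. i < n \<longrightarrow> (\<forall>x\<in>K. \<bar>f i x\<bar> \<le> B i)" by blast
  have B: "\<bar>f i x\<bar> \<le> B i" if "i < n" "x \<in> K" for i x using B0 that by blast
  define R0 where "R0 = (\<Sum>i<n. \<bar>B i\<bar>)"
  have R0: "0 \<le> R0" unfolding R0_def by (simp add: sum_nonneg)
  have FR: "\<bar>F x j\<bar> \<le> R0" if "x \<in> K" "j < n" for x j
  proof -
    have "\<bar>F x j\<bar> \<le> \<bar>B j\<bar>" using B[OF that(2,1)] that unfolding F_def tuple_def by simp
    also have "\<dots> \<le> R0" unfolding R0_def using that(2) by (intro member_le_sum) auto
    finally show ?thesis .
  qed
  have e2: "0 < \<epsilon>/2" using e by simp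
  have "\<exists>u. continuous_on (Rn n) u \<and> u ` Rn n \<subseteq> Rn m \<and> (\<forall>x\<in>K. vnorm m (g x - u (F x)) < \<epsilon>/2)"
    using f_dense[unfolded dense_comp_def, rule_format, OF g e2] unfolding F_def .
  then obtain u where uc: "continuous_on (Rn n) u" and uR: "u ` Rn n \<subseteq> Rn m"
    and uapp: "\<forall>x\<in>K. vnorm m (g x - u (F x)) < \<epsilon>/2" by blast
  have mpos: "0 < real m" using m_pos by simp
  define \<delta> where "\<delta> = \<epsilon> / (4 * m)"
  have d0: "0 < \<delta>" unfolding \<delta>_def using e mpos by simp
  have "\<forall>k. \<exists>L. \<forall>v\<in>C. \<bar>u v k - expsum n L v\<bar> < \<delta>"
  proof (intro allI)
    fix k
    have "continuous_on C u" using uc CR continuous_on_subset by blast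
    then have "continuous_on C (\<lambda>v. u v k)" by (rule continuous_on_product_then_coordinatewise)
    then show "\<exists>L. \<forall>v\<in>C. \<bar>u v k - expsum n L v\<bar> < \<delta>" by (rule sw_exp[OF Cc CR _ d0])
  qed
  from choice[OF this] obtain Ls where Ls0: "\<forall>k. \<forall>v\<in>C. \<bar>u v k - expsum n (Ls k) v\<bar> < \<delta>" by blast
  have Ls: "\<bar>u v k - expsum n (Ls k) v\<bar> < \<delta>" if "k < m" "v \<in> C" for k v using Ls0 that by blast
  obtain H where HN: "is_deep_net \<sigma> n (n + m + 2) m H"
    and HP: "\<forall>v. (\<forall>j. n \<le> j \<longrightarrow> v j = 0) \<and> (\<forall>j<n. \<bar>v j\<bar> \<le> R0) \<longrightarrow>
        (\<forall>k<m. \<bar>H v k - expsum n (Ls k) v\<bar> < \<delta>)"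
    using final_net[OF \<sigma>_cont AI sq m_pos d0 R0, of n Ls] by blast
  show "\<exists>H\<in>NN \<sigma> (n + m + 2) m n (tuple n f). \<forall>x\<in>K. vnorm m (g x - H x) < \<epsilon>"
  proof (intro bexI[of _ "H \<circ> F"] ballI)
    show "H \<circ> F \<in> NN \<sigma> (n + m + 2) m n (tuple n f)" unfolding NN_def F_def using HN by blast
    fix x assume x: "x \<in> K"
    define v where "v = F x"
    have vC: "v \<in> C" unfolding v_def C_def using x by blast
    have vz: "\<forall>j. n \<le> j \<longrightarrow> v j = 0" unfolding v_def F_def tuple_def by simp
    have vb: "\<forall>j<n. \<bar>v j\<bar> \<le> R0" unfolding v_def using FR[OF x] by blast
    have k1: "\<bar>u v k - H v k\<bar> < 2 * \<delta>" if k: "k < m" for k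
    proof -
      have "\<bar>u v k - expsum n (Ls k) v\<bar> < \<delta>" by (rule Ls[OF k vC])
      moreover have "\<bar>H v k - expsum n (Ls k) v\<bar> < \<delta>" using HP vz vb k by blast
      ultimately show ?thesis by linarith
    qed
    have "vnorm m (\<lambda>i. u v i - H v i) \<le> (\<Sum>k<m. \<bar>u v k - H v k\<bar>)" by (rule vnorm_le_sum)
    also have "\<dots> < (\<Sum>k<m. 2 * \<delta>)"
    proof (rule sum_strict_mono)
      have "0 \<in> {..<m}" using m_pos by simp
      then show "{..<m} \<noteq> {}" by blast
    qed (use k1 in auto)
    also have "\<dots> = \<epsilon> / 2" unfolding \<delta>_def using mpos by simp
    finally have a: "vnorm m (\<lambda>i. u v i - H v i) < \<epsilon>/2" .
    have b: "vnorm m (g x - u v) < \<epsilon>/2" using uapp x unfolding v_def by blast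
    have "vnorm m (g x - (H \<circ> F) x) = vnorm m (\<lambda>i. (g x - u v) i + (u v i - H v i))"
      unfolding v_def by (simp add: fun_diff_def)
    also have "\<dots> \<le> vnorm m (g x - u v) + vnorm m (\<lambda>i. u v i - H v i)" by (rule vnorm_triangle)
    also have "\<dots> < \<epsilon>" using a b by linarith
    finally show "vnorm m (g x - (H \<circ> F) x) < \<epsilon>" .
  qed
qed

end
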